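(* Let $G$ be a finite connected undirected graph with vertices $v_1,\dots,v_n$ whose adjacency matrix $A(G)$ has Perron–Frobenius eigenvalue $\lambda_1>0$, with unit Perron–Frobenius eigenvector $X=(x_1,\dots,x_n)$ (all $x_m>0$), and let $\lambda=|\lambda_2|/\lambda_1<1$ where $\lambda_2$ is the eigenvalue of second largest modulus. Let $\Gamma$ be a group, $\gamma:V(G)\to\Gamma$, $t_m=\gamma(v_m)$, assume $\{t_a^{-1}t_b\}$ generates $\Gamma$, and let $\kappa>0$ be such that for every nontrivial irreducible finite-dimensional unitary representation $\rho$ of $\Gamma$ with finite image and every unit vector $u$ there is $s\in\{t_a^{-1}t_b\}$ with $\|\rho(s)u-u\|>\kappa$. Set $d=1-(\min_m x_m^2)\kappa^2/8$. Then for every such $\rho$, of dimension $k$, with $U=\mathrm{diag}(\rho(t_1),\dots,\rho(t_n))$ and $A=\lambda_1^{-1}A(G)\otimes I_k$, we have $\|(UA)^k\|_{op}\le g(\lambda,d)^{\lfloor k/2\rfloor}$ for all $k\ge 0$, where $g(\lambda,d)<1$ is a number depending only on $\lambda$ and $d$ (as in the preceding shrinkage theorem: for Hermitian $A$ with eigenvalue $1$, all other eigenvalues of modulus $\le\lambda$, and unitary $U$ with $\|P_{\max}Uv\|\le d\|v\|$ on the $1$-eigenspace, $\|(UA)^2\|_{op}\le g(\lambda,d)$).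
   Context: $\|\cdot\|_{op}$ is the operator norm; $P_{\max}$ is the orthogonal projection onto the eigenspace of $A$ for the eigenvalue $1$. *)

theory Defs
  imports "Jordan_Normal_Form.Spectral_Radius" "Jordan_Normal_Form.Schur_Decomposition"
          "HOL-Algebra.Generated_Groups"
begin

definition simple_graph :: "nat \<Rightarrow> (nat \<Rightarrow> nat \<Rightarrow> bool) \<Rightarrow> bool" where
  "simple_graph n E \<longleftrightarrow> (\<forall>a<n. \<forall>b<n. E a b = E b a) \<and> (\<forall>a<n. \<not> E a a)"

definition graph_connected :: "nat \<Rightarrow> (nat \<Rightarrow> nat \<Rightarrow> bool) \<Rightarrow> bool" where
  "graph_connected n E \<longleftrightarrow> 0 < n \<and>
     (\<forall>a<n. \<forall>b<n. (a, b) \<in> {(x, y). x < n \<and> y < n \<and> E x y}\<^sup>*)"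

definition adj_mat :: "nat \<Rightarrow> (nat \<Rightarrow> nat \<Rightarrow> bool) \<Rightarrow> real mat" where
  "adj_mat n E = mat n n (\<lambda>(a, b). if E a b then 1 else 0)"

definition cinner :: "complex vec \<Rightarrow> complex vec \<Rightarrow> complex" where
  "cinner x y = (\<Sum>i<dim_vec x. x $ i * cnj (y $ i))"

definition vnorm :: "complex vec \<Rightarrow> real" where
  "vnorm x = sqrt (\<Sum>i<dim_vec x. (cmod (x $ i))\<^sup>2)"

definition proj :: "complex vec set \<Rightarrow> complex vec \<Rightarrow> complex vec" where
  "proj W x = (THE w. w \<in> W \<and> (\<forall>z\<in>W. cinner (x - w) z = 0))"

definition opnorm :: "complex mat \<Rightarrow> real" where
  "opnorm M = Sup {vnorm (M *\<^sub>v v) | v. v \<in> carrier_vec (dim_col M) \<and> vnorm v \<le> 1}"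

definition unitary_mat :: "nat \<Rightarrow> complex mat \<Rightarrow> bool" where
  "unitary_mat k M \<longleftrightarrow> M \<in> carrier_mat k k \<and> mat_adjoint M * M = 1\<^sub>m k"

definition hermitian_mat :: "nat \<Rightarrow> complex mat \<Rightarrow> bool" where
  "hermitian_mat k M \<longleftrightarrow> M \<in> carrier_mat k k \<and> mat_adjoint M = M"

(* Kronecker product, index (a,r) \<mapsto> a * dim_row B + r *)
definition kron :: "complex mat \<Rightarrow> complex mat \<Rightarrow> complex mat" where
  "kron A B = mat (dim_row A * dim_row B) (dim_col A * dim_col B)
     (\<lambda>(i, j). A $$ (i div dim_row B, j div dim_col B) * B $$ (i mod dim_row B, j mod dim_col B))"

definition unitary_rep :: "('g, 'b) monoid_scheme \<Rightarrow> nat \<Rightarrow> ('g \<Rightarrow> complex mat) \<Rightarrow> bool" where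
  "unitary_rep G k \<rho> \<longleftrightarrow>
     (\<forall>g\<in>carrier G. unitary_mat k (\<rho> g)) \<and>
     (\<forall>g\<in>carrier G. \<forall>h\<in>carrier G. \<rho> (g \<otimes>\<^bsub>G\<^esub> h) = \<rho> g * \<rho> h)"

definition subspace_of :: "nat \<Rightarrow> complex vec set \<Rightarrow> bool" where
  "subspace_of k W \<longleftrightarrow> W \<subseteq> carrier_vec k \<and> 0\<^sub>v k \<in> W \<and>
     (\<forall>x\<in>W. \<forall>y\<in>W. x + y \<in> W) \<and> (\<forall>c. \<forall>x\<in>W. c \<cdot>\<^sub>v x \<in> W)"

definition irreducible_rep :: "('g, 'b) monoid_scheme \<Rightarrow> nat \<Rightarrow> ('g \<Rightarrow> complex mat) \<Rightarrow> bool" where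
  "irreducible_rep G k \<rho> \<longleftrightarrow> unitary_rep G k \<rho> \<and> 0 < k \<and>
     (\<forall>W. subspace_of k W \<and> (\<forall>g\<in>carrier G. \<forall>w\<in>W. \<rho> g *\<^sub>v w \<in> W)
          \<longrightarrow> W = {0\<^sub>v k} \<or> W = carrier_vec k)"

definition nontrivial_rep :: "('g, 'b) monoid_scheme \<Rightarrow> nat \<Rightarrow> ('g \<Rightarrow> complex mat) \<Rightarrow> bool" where
  "nontrivial_rep G k \<rho> \<longleftrightarrow> (\<exists>g\<in>carrier G. \<rho> g \<noteq> 1\<^sub>m k)"

(* The preceding shrinkage theorem, as a property of the constant g(\<lambda>,d):
   Hermitian A with eigenvalue 1 and all other eigenvalues of modulus \<le> \<lambda>, unitary U with
   ||P_max U v|| \<le> d ||v|| for v in the 1-eigenspace  \<Longrightarrow>  ||(UA)^2||_op \<le> g \<lambda> d *)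
definition shrinkage_const :: "(real \<Rightarrow> real \<Rightarrow> real) \<Rightarrow> bool" where
  "shrinkage_const g \<longleftrightarrow>
    (\<forall>l d N A U. 0 \<le> l \<and> l < 1 \<and> 0 \<le> d \<and> d < 1 \<and>
       hermitian_mat N A \<and> eigenvalue A 1 \<and>
       (\<forall>\<mu>\<in>spectrum A. \<mu> \<noteq> 1 \<longrightarrow> cmod \<mu> \<le> l) \<and>
       unitary_mat N U \<and>
       (\<forall>v\<in>{v \<in> carrier_vec N. A *\<^sub>v v = v}.
          vnorm (proj {v \<in> carrier_vec N. A *\<^sub>v v = v} (U *\<^sub>v v)) \<le> d * vnorm v)
     \<longrightarrow> opnorm ((U * A) ^\<^sub>m 2) \<le> g l d)"

end

theory Submission
  imports Defs
begin

lemma cinner_sum: "dim_vec x = n \<Longrightarrow> cinner x y = (\<Sum>i<n. x $ i * cnj (y $ i))"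
  by (simp add: cinner_def)

lemma vnorm_sq: "(vnorm x)\<^sup>2 = (\<Sum>i<dim_vec x. (cmod (x $ i))\<^sup>2)"
  unfolding vnorm_def by (simp add: sum_nonneg)

lemma vnorm_ge0[simp]: "0 \<le> vnorm x"
  unfolding vnorm_def by (simp add: sum_nonneg)

lemma cinner_self: "cinner x x = complex_of_real ((vnorm x)\<^sup>2)"
  unfolding vnorm_sq cinner_def of_real_sum by (intro sum.cong refl) (rule complex_norm_square[symmetric])

lemma cinner_self_Re: "Re (cinner x x) = (vnorm x)\<^sup>2"
  by (simp add: cinner_self)

lemma cinner_add_left: "x \<in> carrier_vec n \<Longrightarrow> y \<in> carrier_vec n \<Longrightarrow>
  cinner (x + y) z = cinner x z + cinner y z"
  unfolding cinner_def by (simp add: algebra_simps sum.distrib)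

lemma cinner_add_right: "x \<in> carrier_vec n \<Longrightarrow> y \<in> carrier_vec n \<Longrightarrow> z \<in> carrier_vec n \<Longrightarrow>
  cinner z (x + y) = cinner z x + cinner z y"
  unfolding cinner_def by (simp add: algebra_simps sum.distrib)

lemma cinner_minus_left: "x \<in> carrier_vec n \<Longrightarrow> y \<in> carrier_vec n \<Longrightarrow>
  cinner (x - y) z = cinner x z - cinner y z"
  unfolding cinner_def by (simp add: algebra_simps sum_subtractf)

lemma cinner_minus_right: "x \<in> carrier_vec n \<Longrightarrow> y \<in> carrier_vec n \<Longrightarrow> z \<in> carrier_vec n \<Longrightarrow>
  cinner z (x - y) = cinner z x - cinner z y"
  unfolding cinner_def by (simp add: algebra_simps sum_subtractf)

lemma cinner_smult_left: "cinner (c \<cdot>\<^sub>v x) z = c * cinner x z"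
  unfolding cinner_def by (simp add: algebra_simps sum_distrib_left)

lemma cinner_smult_right: "x \<in> carrier_vec n \<Longrightarrow> z \<in> carrier_vec n \<Longrightarrow>
  cinner z (c \<cdot>\<^sub>v x) = cnj c * cinner z x"
  unfolding cinner_def by (simp add: algebra_simps sum_distrib_left)

lemma cinner_commute: "x \<in> carrier_vec n \<Longrightarrow> y \<in> carrier_vec n \<Longrightarrow>
  cinner y x = cnj (cinner x y)"
  unfolding cinner_def by (simp add: algebra_simps)

lemma cinner_zero_left[simp]: "cinner (0\<^sub>v n) y = 0"
  unfolding cinner_def by simp

lemma cinner_zero_right: "x \<in> carrier_vec n \<Longrightarrow> cinner x (0\<^sub>v n) = 0"
  unfolding cinner_def by simp

lemma vnorm_zero[simp]: "vnorm (0\<^sub>v n) = 0"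
  unfolding vnorm_def by simp

lemma vnorm_eq_0: assumes "x \<in> carrier_vec n" shows "vnorm x = 0 \<longleftrightarrow> x = 0\<^sub>v n"
proof
  assume "vnorm x = 0"
  hence "(\<Sum>i<n. (cmod (x $ i))\<^sup>2) = 0" using vnorm_sq[of x] assms by simp
  hence "\<forall>i\<in>{..<n}. (cmod (x $ i))\<^sup>2 = 0" by (subst (asm) sum_nonneg_eq_0_iff) auto
  thus "x = 0\<^sub>v n" using assms by (intro eq_vecI) auto
qed simp

lemma vnorm_add_sq: "x \<in> carrier_vec n \<Longrightarrow> y \<in> carrier_vec n \<Longrightarrow>
  (vnorm (x + y))\<^sup>2 = (vnorm x)\<^sup>2 + (vnorm y)\<^sup>2 + 2 * Re (cinner x y)"
proof -
  assume x: "x \<in> carrier_vec n" and y: "y \<in> carrier_vec n"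
  have "complex_of_real ((vnorm (x + y))\<^sup>2) = cinner (x + y) (x + y)" by (simp add: cinner_self)
  also have "\<dots> = cinner x x + cinner x y + cinner y x + cinner y y"
    using x y by (simp add: cinner_add_left cinner_add_right)
  also have "cinner y x = cnj (cinner x y)" using x y by (rule cinner_commute)
  finally have "complex_of_real ((vnorm (x + y))\<^sup>2) = cinner x x + cinner x y + cnj (cinner x y) + cinner y y" .
  hence "(vnorm (x + y))\<^sup>2 = Re (cinner x x + cinner x y + cnj (cinner x y) + cinner y y)"
    by (metis Re_complex_of_real)
  thus ?thesis by (simp add: cinner_self_Re)
qed

lemma vnorm_minus_sq: "x \<in> carrier_vec n \<Longrightarrow> y \<in> carrier_vec n \<Longrightarrow>
  (vnorm (x - y))\<^sup>2 = (vnorm x)\<^sup>2 + (vnorm y)\<^sup>2 - 2 * Re (cinner x y)"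
proof -
  assume x: "x \<in> carrier_vec n" and y: "y \<in> carrier_vec n"
  have "complex_of_real ((vnorm (x - y))\<^sup>2) = cinner (x - y) (x - y)" by (simp add: cinner_self)
  also have "\<dots> = cinner x x - cinner x y - cinner y x + cinner y y"
    using x y by (simp add: cinner_minus_left cinner_minus_right)
  also have "cinner y x = cnj (cinner x y)" using x y by (rule cinner_commute)
  finally have "complex_of_real ((vnorm (x - y))\<^sup>2) = cinner x x - cinner x y - cnj (cinner x y) + cinner y y" .
  hence "(vnorm (x - y))\<^sup>2 = Re (cinner x x - cinner x y - cnj (cinner x y) + cinner y y)"
    by (metis Re_complex_of_real)
  thus ?thesis by (simp add: cinner_self_Re)
qed

lemma vnorm_smult: "vnorm (c \<cdot>\<^sub>v x) = cmod c * vnorm x"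
  unfolding vnorm_def by (simp add: norm_mult power_mult_distrib sum_distrib_left[symmetric] real_sqrt_mult)

lemma cauchy_schwarz: assumes x: "x \<in> carrier_vec n" and y: "y \<in> carrier_vec n"
  shows "cmod (cinner x y) \<le> vnorm x * vnorm y"
proof (cases "vnorm y = 0")
  case True
  hence "y = 0\<^sub>v n" using vnorm_eq_0[OF y] by simp
  thus ?thesis using x by (simp add: cinner_zero_right)
next
  case False
  hence yp: "vnorm y > 0" using vnorm_ge0[of y] by linarith
  define c where "c = cinner x y / complex_of_real ((vnorm y)\<^sup>2)"
  have "0 \<le> (vnorm (x - c \<cdot>\<^sub>v y))\<^sup>2" by simp
  also have "\<dots> = (vnorm x)\<^sup>2 + (cmod c * vnorm y)\<^sup>2 - 2 * Re (cinner x (c \<cdot>\<^sub>v y))"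
    using x y by (simp add: vnorm_minus_sq vnorm_smult)
  also have "cinner x (c \<cdot>\<^sub>v y) = cnj c * cinner x y" by (rule cinner_smult_right[OF y x])
  also have "cnj c * cinner x y = (cinner x y * cnj (cinner x y)) / complex_of_real ((vnorm y)\<^sup>2)"
    unfolding c_def by (simp add: mult.commute)
  also have "\<dots> = complex_of_real ((cmod (cinner x y))\<^sup>2 / (vnorm y)\<^sup>2)"
    by (subst complex_norm_square[symmetric]) simp
  also have "(cmod c * vnorm y)\<^sup>2 = (cmod (cinner x y))\<^sup>2 / (vnorm y)\<^sup>2"
  proof -
    have cc: "cmod c = cmod (cinner x y) / (vnorm y)\<^sup>2" unfolding c_def by (simp add: norm_divide norm_power)
    show ?thesis using yp by (simp add: cc power2_eq_square field_simps)
  qed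
  finally have "0 \<le> (vnorm x)\<^sup>2 - (cmod (cinner x y))\<^sup>2 / (vnorm y)\<^sup>2" by simp
  hence "(cmod (cinner x y))\<^sup>2 \<le> (vnorm x)\<^sup>2 * (vnorm y)\<^sup>2" using yp
    by (simp add: field_simps)
  hence "(cmod (cinner x y))\<^sup>2 \<le> (vnorm x * vnorm y)\<^sup>2" by (simp add: power_mult_distrib)
  thus ?thesis by (rule power2_le_imp_le) simp
qed

lemma vnorm_triangle: assumes x: "x \<in> carrier_vec n" and y: "y \<in> carrier_vec n"
  shows "vnorm (x + y) \<le> vnorm x + vnorm y"
proof -
  have "Re (cinner x y) \<le> vnorm x * vnorm y"
    using cauchy_schwarz[OF x y] complex_Re_le_cmod[of "cinner x y"] by linarith
  hence "(vnorm (x + y))\<^sup>2 \<le> (vnorm x + vnorm y)\<^sup>2"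
    using vnorm_add_sq[OF x y] by (simp add: power2_eq_square algebra_simps)
  thus ?thesis by (rule power2_le_imp_le) simp
qed

lemma vnorm_minus_triangle: assumes x: "x \<in> carrier_vec n" and y: "y \<in> carrier_vec n"
  shows "vnorm (x - y) \<le> vnorm x + vnorm y"
proof -
  have "x - y = x + (-1) \<cdot>\<^sub>v y" using x y by auto
  thus ?thesis using vnorm_triangle[OF x, of "(-1) \<cdot>\<^sub>v y"] y by (simp add: vnorm_smult)
qed

lemma mat_adjoint_dim[simp]: "dim_row (mat_adjoint M) = dim_col M" "dim_col (mat_adjoint M) = dim_row M"
  for M :: "complex mat" by (auto simp: mat_adjoint_def)

lemma mat_adjoint_carrier[simp]: "M \<in> carrier_mat n m \<Longrightarrow> mat_adjoint M \<in> carrier_mat m n"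
  for M :: "complex mat" by (intro carrier_matI) auto

lemma mat_adjoint_index[simp]: "i < dim_col M \<Longrightarrow> j < dim_row M \<Longrightarrow>
  mat_adjoint M $$ (i, j) = cnj (M $$ (j, i))"
  for M :: "complex mat" by (simp add: mat_adjoint_def mat_of_rows_def)

lemma mat_adjoint_adjoint[simp]: "mat_adjoint (mat_adjoint M) = M"
  for M :: "complex mat" by (rule eq_matI) auto

lemma mat_adjoint_mult: fixes A B :: "complex mat"
  assumes A: "A \<in> carrier_mat n m" and B: "B \<in> carrier_mat m p"
  shows "mat_adjoint (A * B) = mat_adjoint B * mat_adjoint A"
proof (rule eq_matI)
  fix i j assume "i < dim_row (mat_adjoint B * mat_adjoint A)" "j < dim_col (mat_adjoint B * mat_adjoint A)"
  hence i: "i < p" and j: "j < n" using carrier_matD[OF A] carrier_matD[OF B] by auto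
  show "mat_adjoint (A * B) $$ (i, j) = (mat_adjoint B * mat_adjoint A) $$ (i, j)"
    using A B i j by (simp add: scalar_prod_def mult.commute)
qed (use A B in auto)

lemma cinner_adjoint: assumes M: "M \<in> carrier_mat n m" and x: "x \<in> carrier_vec m" and y: "y \<in> carrier_vec n"
  shows "cinner (M *\<^sub>v x) y = cinner x (mat_adjoint M *\<^sub>v y)"
proof -
  have "cinner (M *\<^sub>v x) y = (\<Sum>i<n. (\<Sum>j<m. M $$ (i,j) * x $ j) * cnj (y $ i))"
    using M x y by (simp add: cinner_def scalar_prod_def atLeast0LessThan)
  also have "\<dots> = (\<Sum>i<n. \<Sum>j<m. M $$ (i,j) * x $ j * cnj (y $ i))"
    by (simp add: sum_distrib_right)
  also have "\<dots> = (\<Sum>j<m. \<Sum>i<n. M $$ (i,j) * x $ j * cnj (y $ i))"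
    by (rule sum.swap)
  also have "\<dots> = (\<Sum>j<m. x $ j * cnj (\<Sum>i<n. cnj (M $$ (i,j)) * y $ i))"
    by (simp add: sum_distrib_left mult_ac)
  also have "\<dots> = cinner x (mat_adjoint M *\<^sub>v y)"
    using M x y by (simp add: cinner_def scalar_prod_def atLeast0LessThan)
  finally show ?thesis .
qed

lemma unitary_other: assumes "unitary_mat n U" shows "U * mat_adjoint U = 1\<^sub>m n"
  using assms unfolding unitary_mat_def
  by (intro mat_mult_left_right_inverse[of "mat_adjoint U" n]) auto

lemma unitary_adjoint: assumes "unitary_mat n U" shows "unitary_mat n (mat_adjoint U)"
  using unitary_other[OF assms] assms unfolding unitary_mat_def by auto

lemma unitary_cinner: assumes U: "unitary_mat n U" and x: "x \<in> carrier_vec n" and y: "y \<in> carrier_vec n"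
  shows "cinner (U *\<^sub>v x) (U *\<^sub>v y) = cinner x y"
proof -
  have Uc: "U \<in> carrier_mat n n" using U unitary_mat_def by auto
  have "cinner (U *\<^sub>v x) (U *\<^sub>v y) = cinner x (mat_adjoint U *\<^sub>v (U *\<^sub>v y))"
    using Uc x y by (intro cinner_adjoint) auto
  also have "mat_adjoint U *\<^sub>v (U *\<^sub>v y) = (mat_adjoint U * U) *\<^sub>v y"
    using assoc_mult_mat_vec[OF mat_adjoint_carrier[OF Uc] Uc y] by simp
  also have "\<dots> = y" using U y unfolding unitary_mat_def by auto
  finally show ?thesis .
qed

lemma unitary_vnorm: assumes U: "unitary_mat n U" and x: "x \<in> carrier_vec n"
  shows "vnorm (U *\<^sub>v x) = vnorm x"
proof -
  have "complex_of_real ((vnorm (U *\<^sub>v x))\<^sup>2) = complex_of_real ((vnorm x)\<^sup>2)"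
    using unitary_cinner[OF U x x] by (simp add: cinner_self)
  hence "(vnorm (U *\<^sub>v x))\<^sup>2 = (vnorm x)\<^sup>2" by (metis of_real_eq_iff)
  thus ?thesis using vnorm_ge0 by (metis power2_eq_imp_eq)
qed

lemma hermitian_cinner: assumes A: "hermitian_mat n A" and x: "x \<in> carrier_vec n" and y: "y \<in> carrier_vec n"
  shows "cinner (A *\<^sub>v x) y = cinner x (A *\<^sub>v y)"
  using cinner_adjoint[of A n n x y] A x y unfolding hermitian_mat_def by auto


definition diagm :: "nat \<Rightarrow> (nat \<Rightarrow> complex) \<Rightarrow> complex mat" where
  "diagm N \<mu> = mat N N (\<lambda>(i,j). if i = j then \<mu> i else 0)"

lemma diagm_carrier[simp]: "diagm N \<mu> \<in> carrier_mat N N"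
  by (simp add: diagm_def)

lemma diagm_mult_vec: "z \<in> carrier_vec N \<Longrightarrow> diagm N \<mu> *\<^sub>v z = vec N (\<lambda>i. \<mu> i * z $ i)"
proof (intro eq_vecI)
  fix i assume z: "z \<in> carrier_vec N" and "i < dim_vec (vec N (\<lambda>i. \<mu> i * z $ i))"
  hence i: "i < N" by simp
  have "(diagm N \<mu> *\<^sub>v z) $ i = (\<Sum>r\<in>{0..<N}. (if i = r then \<mu> i else 0) * z $ r)"
    using i z by (simp add: diagm_def scalar_prod_def)
  also have "\<dots> = (\<Sum>r\<in>{0..<N}. if r = i then \<mu> i * z $ i else 0)"
    by (intro sum.cong) auto
  also have "\<dots> = \<mu> i * z $ i" using i by (simp add: sum.delta)
  finally show "(diagm N \<mu> *\<^sub>v z) $ i = vec N (\<lambda>i. \<mu> i * z $ i) $ i" using i by simp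
qed (auto simp: diagm_def)

lemma mult_diagm_index: assumes M: "M \<in> carrier_mat N N" and i: "i < N" and j: "j < N"
  shows "(M * diagm N \<mu>) $$ (i,j) = M $$ (i,j) * \<mu> j"
proof -
  have "(M * diagm N \<mu>) $$ (i,j) = (\<Sum>r\<in>{0..<N}. M $$ (i,r) * (if r = j then \<mu> r else 0))"
    using M i j by (simp add: diagm_def scalar_prod_def)
  also have "\<dots> = (\<Sum>r\<in>{0..<N}. if r = j then M $$ (i,j) * \<mu> j else 0)"
    by (intro sum.cong) auto
  also have "\<dots> = M $$ (i,j) * \<mu> j" using j by (simp add: sum.delta)
  finally show ?thesis .
qed

lemma unitary_carrier: "unitary_mat n V \<Longrightarrow> V \<in> carrier_mat n n"
  by (simp add: unitary_mat_def)

lemma unitary_sum: assumes V: "unitary_mat n V" and i: "i < n" and j: "j < n"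
  shows "(\<Sum>r<n. cnj (V $$ (r,i)) * V $$ (r,j)) = (if i = j then 1 else 0)"
proof -
  have Vc: "V \<in> carrier_mat n n" using V by (simp add: unitary_mat_def)
  have "(mat_adjoint V * V) $$ (i,j) = 1\<^sub>m n $$ (i,j)" using V by (simp add: unitary_mat_def)
  moreover have "(mat_adjoint V * V) $$ (i,j) = (\<Sum>r<n. cnj (V $$ (r,i)) * V $$ (r,j))"
    using Vc i j by (simp add: scalar_prod_def atLeast0LessThan)
  ultimately show ?thesis using i j by simp
qed

lemma unitaryI_sum: assumes Vc: "V \<in> carrier_mat n n"
  and S: "\<And>i j. i < n \<Longrightarrow> j < n \<Longrightarrow> (\<Sum>r<n. cnj (V $$ (r,i)) * V $$ (r,j)) = (if i = j then 1 else 0)"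
  shows "unitary_mat n V"
  unfolding unitary_mat_def
proof (intro conjI Vc eq_matI)
  fix i j assume "i < dim_row (1\<^sub>m n :: complex mat)" "j < dim_col (1\<^sub>m n :: complex mat)"
  hence i: "i < n" and j: "j < n" by auto
  have "(mat_adjoint V * V) $$ (i,j) = (\<Sum>r<n. cnj (V $$ (r,i)) * V $$ (r,j))"
    using Vc i j by (simp add: scalar_prod_def atLeast0LessThan)
  thus "(mat_adjoint V * V) $$ (i,j) = 1\<^sub>m n $$ (i,j)" using S[OF i j] i j by simp
qed (use Vc in auto)

lemma unitary_mult: assumes P: "unitary_mat n P" and Q: "unitary_mat n Q"
  shows "unitary_mat n (P * Q)"
proof -
  have Pc: "P \<in> carrier_mat n n" and Qc: "Q \<in> carrier_mat n n" using P Q unitary_carrier by auto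
  have "mat_adjoint (P * Q) * (P * Q) = (mat_adjoint Q * mat_adjoint P) * (P * Q)"
    using mat_adjoint_mult[OF Pc Qc] by simp
  also have "\<dots> = mat_adjoint Q * ((mat_adjoint P * P) * Q)"
    using Pc Qc by (simp add: assoc_mult_mat[of _ n n _ n _ n])
  also have "\<dots> = mat_adjoint Q * Q" using P Qc by (simp add: unitary_mat_def)
  also have "\<dots> = 1\<^sub>m n" using Q by (simp add: unitary_mat_def)
  finally show ?thesis unfolding unitary_mat_def using Pc Qc by auto
qed

lemma cinner_sprod: "dim_vec x = dim_vec y \<Longrightarrow> cinner x y = x \<bullet>c y"
  by (simp add: cinner_def scalar_prod_def atLeast0LessThan)

lemma adj_mult_entry: assumes X: "X \<in> carrier_mat N p" and Y: "Y \<in> carrier_mat N q"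
  and i: "i < p" and j: "j < q"
  shows "(mat_adjoint X * Y) $$ (i,j) = cinner (col Y j) (col X i)"
  using X Y i j by (simp add: scalar_prod_def cinner_def atLeast0LessThan mult.commute)


lemma hermitian_entry: "hermitian_mat N A \<Longrightarrow> i < N \<Longrightarrow> j < N \<Longrightarrow> A $$ (i,j) = cnj (A $$ (j,i))"
proof -
  assume h: "hermitian_mat N A" and i: "i < N" and j: "j < N"
  have Ac: "A \<in> carrier_mat N N" and adj: "mat_adjoint A = A" using h by (auto simp: hermitian_mat_def)
  have "A $$ (i,j) = mat_adjoint A $$ (i,j)" using adj by simp
  also have "\<dots> = cnj (A $$ (j,i))" using Ac i j by simp
  finally show ?thesis .
qed

lemma hermitianI_entry: assumes Ac: "A \<in> carrier_mat N N"
  and e: "\<And>i j. i < N \<Longrightarrow> j < N \<Longrightarrow> A $$ (i,j) = cnj (A $$ (j,i))"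
  shows "hermitian_mat N A"
  unfolding hermitian_mat_def
proof (intro conjI Ac eq_matI)
  fix i j assume "i < dim_row A" "j < dim_col A"
  hence i: "i < N" and j: "j < N" using Ac by auto
  show "mat_adjoint A $$ (i, j) = A $$ (i, j)" using Ac i j e[OF i j] by simp
qed (use Ac in auto)

lemma hermitian_diagonalizable:
  "hermitian_mat N A \<Longrightarrow> \<exists>Q \<mu>. unitary_mat N Q \<and> A * Q = Q * diagm N \<mu>"
proof (induction N arbitrary: A)
  case 0
  have Ac: "A \<in> carrier_mat 0 0" using 0 by (simp add: hermitian_mat_def)
  have "unitary_mat 0 (1\<^sub>m 0)" by (rule unitaryI_sum) auto
  moreover have "A * 1\<^sub>m 0 = 1\<^sub>m 0 * diagm 0 (\<lambda>_. 0)"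
    using Ac by (intro eq_matI) (auto simp: diagm_def)
  ultimately show ?case by blast
next
  case (Suc n)
  define N where "N = Suc n"
  have Ah: "hermitian_mat N A" using Suc.prems N_def by simp
  have Ac: "A \<in> carrier_mat N N" using Ah by (simp add: hermitian_mat_def)
  from spectrum_non_empty[OF Ac] obtain e where "eigenvalue A e"
    unfolding N_def spectrum_def by auto
  then obtain v0 where "eigenvector A v0 e" by (auto simp: eigenvalue_def)
  hence v0: "v0 \<in> carrier_vec N" "v0 \<noteq> 0\<^sub>v N" "A *\<^sub>v v0 = e \<cdot>\<^sub>v v0"
    using Ac by (auto simp: eigenvector_def)
  have nv0: "vnorm v0 > 0" using vnorm_eq_0[OF v0(1)] v0(2) vnorm_ge0[of v0] by linarith
  define v where "v = complex_of_real (1 / vnorm v0) \<cdot>\<^sub>v v0"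
  have vc: "v \<in> carrier_vec N" using v0 by (simp add: v_def)
  have vn: "vnorm v = 1" using nv0 by (simp add: v_def vnorm_smult norm_divide)
  have Av: "A *\<^sub>v v = e \<cdot>\<^sub>v v"
  proof -
    have "A *\<^sub>v v = complex_of_real (1 / vnorm v0) \<cdot>\<^sub>v (A *\<^sub>v v0)"
      unfolding v_def using mult_mat_vec[OF Ac v0(1)] by simp
    also have "\<dots> = e \<cdot>\<^sub>v v" unfolding v0(3) v_def
      by (intro eq_vecI) auto
    finally show ?thesis .
  qed
  have v_ne: "v \<noteq> 0\<^sub>v N" using vn by auto
  interpret cof_vec_space N "TYPE(complex)" .
  from basis_completion[OF vc v_ne]
  have dist_b: "distinct (basis_completion v)" and indep: "\<not> lin_dep (set (basis_completion v))"
    and b: "set (basis_completion v) \<subseteq> carrier_vec N" and hdb: "hd (basis_completion v) = v"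
    and len_b: "length (basis_completion v) = N" by auto
  define b where "b = basis_completion v"
  from hdb len_b obtain vs where bv: "b = v # vs" unfolding b_def N_def by (cases "basis_completion v") auto
  define ws where "ws = gram_schmidt N b"
  from gram_schmidt_result[OF b[folded b_def] dist_b[folded b_def] indep[folded b_def] refl, folded ws_def]
  have ws: "set ws \<subseteq> carrier_vec N" "corthogonal ws" "length ws = N"
    by (auto simp: len_b b_def)
  from gram_schmidt_hd[OF vc, of vs, folded bv] have hdws: "hd ws = v" unfolding ws_def .
  have wsc: "\<And>i. i < N \<Longrightarrow> ws ! i \<in> carrier_vec N" using ws by auto
  have wsnz: "vnorm (ws ! i) > 0" if i: "i < N" for i
  proof -
    have "ws ! i \<bullet>c ws ! i \<noteq> 0" using corthogonalD[OF ws(2), of i i] i ws(3) by auto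
    hence "cinner (ws ! i) (ws ! i) \<noteq> 0" using cinner_sprod[of "ws ! i" "ws ! i"] by simp
    hence "vnorm (ws ! i) \<noteq> 0" by (simp add: cinner_self)
    thus ?thesis using vnorm_ge0[of "ws ! i"] by linarith
  qed
  define ws' where "ws' = map (\<lambda>w. complex_of_real (1 / vnorm w) \<cdot>\<^sub>v w) ws"
  have len': "length ws' = N" using ws by (simp add: ws'_def)
  have ws'i: "\<And>i. i < N \<Longrightarrow> ws' ! i = complex_of_real (1 / vnorm (ws ! i)) \<cdot>\<^sub>v ws ! i"
    using ws by (simp add: ws'_def)
  have ws'c: "\<And>i. i < N \<Longrightarrow> ws' ! i \<in> carrier_vec N" using ws'i wsc by simp
  have orth: "cinner (ws' ! i) (ws' ! j) = (if i = j then 1 else 0)" if i: "i < N" and j: "j < N" for i j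
  proof -
    have "cinner (ws' ! i) (ws' ! j) = complex_of_real (1 / vnorm (ws ! i)) * cnj (complex_of_real (1 / vnorm (ws ! j)))
       * cinner (ws ! i) (ws ! j)"
      unfolding ws'i[OF i] ws'i[OF j] cinner_smult_left cinner_smult_right[OF wsc[OF j] wsc[OF i]] by simp
    also have "cinner (ws ! i) (ws ! j) = ws ! i \<bullet>c ws ! j"
      using wsc[OF i] wsc[OF j] by (intro cinner_sprod) auto
    finally have eq: "cinner (ws' ! i) (ws' ! j) = complex_of_real (1 / vnorm (ws ! i)) * cnj (complex_of_real (1 / vnorm (ws ! j)))
       * (ws ! i \<bullet>c ws ! j)" .
    show ?thesis
    proof (cases "i = j")
      case True
      have "ws ! i \<bullet>c ws ! j = complex_of_real ((vnorm (ws ! i))\<^sup>2)"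
        using True cinner_sprod[of "ws ! i" "ws ! i"] cinner_self[of "ws ! i"] by simp
      thus ?thesis using eq True wsnz[OF i] by (simp add: power2_eq_square)
    next
      case False
      hence "ws ! i \<bullet>c ws ! j = 0" using corthogonalD[OF ws(2), of i j] i j ws(3) by auto
      thus ?thesis using eq False by simp
    qed
  qed
  have ws'0: "ws' ! 0 = v"
  proof -
    have "ws ! 0 = v" using hdws ws(3) unfolding N_def by (cases ws) auto
    thus ?thesis using ws'i[of 0] vn unfolding N_def by simp
  qed
  define W where "W = mat_of_cols N ws'"
  have Wc: "W \<in> carrier_mat N N" unfolding W_def using mat_of_cols_carrier(1)[of N ws'] len' by simp
  have Wij: "\<And>r j. r < N \<Longrightarrow> j < N \<Longrightarrow> W $$ (r,j) = ws' ! j $ r"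
    using len' by (simp add: W_def mat_of_cols_def)
  have colW: "\<And>j. j < N \<Longrightarrow> col W j = ws' ! j"
    using len' ws'c unfolding W_def by (intro col_mat_of_cols) auto
  have W_unit: "unitary_mat N W"
  proof (rule unitaryI_sum[OF Wc])
    fix i j assume i: "i < N" and j: "j < N"
    have "(\<Sum>r<N. cnj (W $$ (r, i)) * W $$ (r, j)) = cinner (ws' ! j) (ws' ! i)"
      using ws'c[OF j] by (simp add: Wij i j cinner_def mult.commute)
    thus "(\<Sum>r<N. cnj (W $$ (r, i)) * W $$ (r, j)) = (if i = j then 1 else 0)"
      using orth[OF j i] by auto
  qed
  have WWH: "W * mat_adjoint W = 1\<^sub>m N" by (rule unitary_other[OF W_unit])
  define A' where "A' = mat_adjoint W * (A * W)"
  have AWc: "A * W \<in> carrier_mat N N" using Ac Wc by simp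
  have A'c: "A' \<in> carrier_mat N N" unfolding A'_def by (rule mult_carrier_mat[OF mat_adjoint_carrier[OF Wc] AWc])
  have A'e: "A' $$ (i,j) = cinner (A *\<^sub>v (ws' ! j)) (ws' ! i)" if i: "i < N" and j: "j < N" for i j
  proof -
    have "A' $$ (i,j) = cinner (col (A * W) j) (col W i)"
      unfolding A'_def by (rule adj_mult_entry[OF Wc AWc i j])
    also have "col (A * W) j = A *\<^sub>v col W j" by (rule col_mult2[OF Ac Wc j])
    finally show ?thesis using colW i j by simp
  qed
  have A'herm: "A' $$ (i,j) = cnj (A' $$ (j,i))" if i: "i < N" and j: "j < N" for i j
  proof -
    have "A' $$ (i,j) = cinner (ws' ! j) (A *\<^sub>v (ws' ! i))"
      using A'e[OF i j] hermitian_cinner[OF Ah ws'c[OF j] ws'c[OF i]] by simp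
    also have "\<dots> = cnj (cinner (A *\<^sub>v (ws' ! i)) (ws' ! j))"
      using Ac ws'c[OF i] ws'c[OF j] by (intro cinner_commute[of _ N]) auto
    finally show ?thesis using A'e[OF j i] by simp
  qed
  have col0: "A' $$ (i,0) = (if i = 0 then e else 0)" if i: "i < N" for i
  proof -
    have "A' $$ (i,0) = cinner (e \<cdot>\<^sub>v v) (ws' ! i)" using A'e[OF i] ws'0 Av unfolding N_def by simp
    also have "\<dots> = e * cinner (ws' ! 0) (ws' ! i)" using ws'0 by (simp add: cinner_smult_left)
    finally show ?thesis using orth[of 0 i] i unfolding N_def by auto
  qed
  have row0: "A' $$ (0,j) = (if j = 0 then e else 0)" if j: "j < N" for j
  proof (cases "j = 0")
    case True thus ?thesis using col0[of 0] unfolding N_def by simp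
  next
    case False
    thus ?thesis using A'herm[of 0 j] col0[OF j] j unfolding N_def by simp
  qed
  define A3 where "A3 = mat n n (\<lambda>(i,j). A' $$ (Suc i, Suc j))"
  have A3h: "hermitian_mat n A3"
    by (rule hermitianI_entry) (auto simp: A3_def N_def intro!: A'herm)
  from Suc.IH[OF A3h] obtain V \<mu>3 where V: "unitary_mat n V" and AV: "A3 * V = V * diagm n \<mu>3"
    by blast
  have Vc: "V \<in> carrier_mat n n" using V unitary_carrier by auto
  define F where "F = mat N N (\<lambda>(i,j). if i = 0 \<and> j = 0 then 1 else if i = 0 \<or> j = 0 then 0 else V $$ (i - 1, j - 1))"
  define \<mu> where "\<mu> = (\<lambda>i. if i = 0 then e else \<mu>3 (i - 1))"
  have Fc: "F \<in> carrier_mat N N" by (simp add: F_def)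
  have F_unit: "unitary_mat N F"
  proof (rule unitaryI_sum[OF Fc])
    fix i j assume i: "i < N" and j: "j < N"
    have "(\<Sum>r<N. cnj (F $$ (r, i)) * F $$ (r, j)) =
      cnj (F $$ (0, i)) * F $$ (0, j) + (\<Sum>r<n. cnj (F $$ (Suc r, i)) * F $$ (Suc r, j))"
      unfolding N_def by (rule sum.lessThan_Suc_shift)
    also have "\<dots> = (if i = j then 1 else 0)"
    proof (cases i)
      case 0
      thus ?thesis using j by (cases j) (auto simp: F_def N_def)
    next
      case (Suc i')
      show ?thesis
      proof (cases j)
        case 0 thus ?thesis using Suc i by (auto simp: F_def N_def)
      next
        case (Suc j')
        have "(\<Sum>r<n. cnj (F $$ (Suc r, i)) * F $$ (Suc r, j)) = (\<Sum>r<n. cnj (V $$ (r, i')) * V $$ (r, j'))"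
          using \<open>i = Suc i'\<close> Suc i j by (intro sum.cong) (auto simp: F_def N_def)
        also have "\<dots> = (if i' = j' then 1 else 0)" using unitary_sum[OF V] \<open>i = Suc i'\<close> Suc i j N_def by auto
        finally show ?thesis using \<open>i = Suc i'\<close> Suc i j by (auto simp: F_def N_def)
      qed
    qed
    finally show "(\<Sum>r<N. cnj (F $$ (r, i)) * F $$ (r, j)) = (if i = j then 1 else 0)" .
  qed
  have A'F: "A' * F = F * diagm N \<mu>"
  proof (rule eq_matI)
    fix i j assume "i < dim_row (F * diagm N \<mu>)" "j < dim_col (F * diagm N \<mu>)"
    hence i: "i < N" and j: "j < N" using Fc by (auto simp: diagm_def)
    have rhs: "(F * diagm N \<mu>) $$ (i,j) = F $$ (i,j) * \<mu> j" by (rule mult_diagm_index[OF Fc i j])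
    have "(A' * F) $$ (i,j) = (\<Sum>r<N. A' $$ (i,r) * F $$ (r,j))"
      using A'c Fc i j by (simp add: scalar_prod_def atLeast0LessThan)
    also have "\<dots> = A' $$ (i,0) * F $$ (0,j) + (\<Sum>r<n. A' $$ (i,Suc r) * F $$ (Suc r,j))"
      unfolding N_def by (rule sum.lessThan_Suc_shift)
    also have "\<dots> = F $$ (i,j) * \<mu> j"
    proof (cases i)
      case 0
      have "(\<Sum>r<n. A' $$ (i,Suc r) * F $$ (Suc r,j)) = 0"
        using 0 row0 by (intro sum.neutral) (auto simp: N_def)
      thus ?thesis using 0 row0[OF j] j by (auto simp: F_def \<mu>_def N_def)
    next
      case (Suc i')
      have c0: "A' $$ (i,0) = 0" using col0[OF i] Suc by simp
      show ?thesis
      proof (cases j)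
        case 0
        have "(\<Sum>r<n. A' $$ (i,Suc r) * F $$ (Suc r,j)) = 0"
          using 0 by (intro sum.neutral) (auto simp: F_def N_def)
        thus ?thesis using 0 c0 Suc i by (auto simp: F_def N_def)
      next
        case (Suc j')
        have i': "i' < n" and j': "j' < n" using \<open>i = Suc i'\<close> Suc i j N_def by auto
        have "(\<Sum>r<n. A' $$ (i,Suc r) * F $$ (Suc r,j)) = (\<Sum>r<n. A3 $$ (i', r) * V $$ (r, j'))"
          using \<open>i = Suc i'\<close> Suc i' j' by (intro sum.cong) (auto simp: F_def A3_def N_def)
        also have "\<dots> = (A3 * V) $$ (i', j')"
          using i' j' Vc by (simp add: A3_def scalar_prod_def atLeast0LessThan)
        also have "\<dots> = V $$ (i', j') * \<mu>3 j'" unfolding AV by (rule mult_diagm_index[OF Vc i' j'])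
        finally show ?thesis using c0 \<open>i = Suc i'\<close> Suc i j by (auto simp: F_def \<mu>_def N_def)
      qed
    qed
    finally show "(A' * F) $$ (i,j) = (F * diagm N \<mu>) $$ (i,j)" using rhs by simp
  qed (use A'c Fc in \<open>auto simp: diagm_def\<close>)
  define Q where "Q = W * F"
  have Q_unit: "unitary_mat N Q" unfolding Q_def by (rule unitary_mult[OF W_unit F_unit])
  have AW: "A * W = W * A'"
  proof -
    have "W * A' = (W * mat_adjoint W) * (A * W)" unfolding A'_def
      using Wc AWc by (simp add: assoc_mult_mat[of _ N N _ N _ N])
    also have "\<dots> = A * W" using WWH left_mult_one_mat[OF AWc] by simp
    finally show ?thesis by simp
  qed
  have "A * Q = (A * W) * F" unfolding Q_def using Ac Wc Fc by (simp add: assoc_mult_mat[of _ N N _ N _ N])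
  also have "\<dots> = W * (A' * F)" unfolding AW using Wc A'c Fc by (simp add: assoc_mult_mat[of _ N N _ N _ N])
  also have "\<dots> = (W * F) * diagm N \<mu>" unfolding A'F using Wc Fc by (simp add: assoc_mult_mat[of _ N N _ N _ N])
  finally have "A * Q = Q * diagm N \<mu>" unfolding Q_def .
  thus ?case using Q_unit unfolding N_def by blast
qed


lemma vec_eq_from_minus: fixes a b :: "complex vec" assumes a: "a \<in> carrier_vec N" and b: "b \<in> carrier_vec N" and ab: "a - b = 0\<^sub>v N"
  shows "a = b"
proof (rule eq_vecI)
  fix i assume "i < dim_vec b"
  hence i: "i < N" using b by simp
  have "(a - b) $ i = 0" using ab i by simp
  thus "a $ i = b $ i" using a b i by simp
qed (use a b in simp)

lemma proj_eq: assumes Wc: "W \<subseteq> carrier_vec N" and Wm: "\<forall>a\<in>W. \<forall>b\<in>W. a - b \<in> W"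
  and x: "x \<in> carrier_vec N" and p: "p \<in> W" and o: "\<forall>z\<in>W. cinner (x - p) z = 0"
  shows "proj W x = p"
  unfolding proj_def
proof (rule the_equality)
  show "p \<in> W \<and> (\<forall>z\<in>W. cinner (x - p) z = 0)" using p o by auto
next
  fix w assume w: "w \<in> W \<and> (\<forall>z\<in>W. cinner (x - w) z = 0)"
  have wc: "w \<in> carrier_vec N" and pc: "p \<in> carrier_vec N" using w p Wc by auto
  have d: "w - p \<in> W" using Wm w p by auto
  have "(x - p) - (x - w) = w - p" using x wc pc by (intro eq_vecI) auto
  hence "cinner (w - p) (w - p) = cinner (x - p) (w - p) - cinner (x - w) (w - p)"
    using cinner_minus_left[of "x - p" N "x - w" "w - p"] x wc pc by simp
  also have "\<dots> = 0" using o w d by simp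
  finally have "vnorm (w - p) = 0" by (simp add: cinner_self)
  hence "w - p = 0\<^sub>v N" using vnorm_eq_0[of "w - p" N] wc pc by simp
  thus "w = p" using vec_eq_from_minus wc pc by blast
qed

lemma unitary_col_nonzero: assumes Q: "unitary_mat N Q" and i: "i < N"
  shows "col Q i \<noteq> 0\<^sub>v N"
proof
  assume c: "col Q i = 0\<^sub>v N"
  have Qc: "Q \<in> carrier_mat N N" using Q unitary_carrier by auto
  have "\<And>r. r < N \<Longrightarrow> Q $$ (r,i) = 0"
  proof -
    fix r assume r: "r < N"
    have "col Q i $ r = 0" using c r by simp
    thus "Q $$ (r,i) = 0" using Qc r i by simp
  qed
  hence "(\<Sum>r<N. cnj (Q $$ (r,i)) * Q $$ (r,i)) = 0" by simp
  thus False using unitary_sum[OF Q i i] by simp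
qed


lemma herm_decomp:
  assumes Ah: "hermitian_mat N A" and l: "0 \<le> l"
  and spec: "\<forall>\<mu>\<in>spectrum A. \<mu> \<noteq> 1 \<longrightarrow> cmod \<mu> \<le> l"
  and x: "x \<in> carrier_vec N"
  shows "\<exists>e f. e \<in> carrier_vec N \<and> f \<in> carrier_vec N \<and> x = e + f \<and> A *\<^sub>v e = e \<and>
     vnorm (A *\<^sub>v f) \<le> l * vnorm f \<and>
     (\<forall>z\<in>carrier_vec N. A *\<^sub>v z = z \<longrightarrow> cinner f z = 0 \<and> cinner (A *\<^sub>v f) z = 0) \<and>
     (vnorm x)\<^sup>2 = (vnorm e)\<^sup>2 + (vnorm f)\<^sup>2"
proof -
  have Ac: "A \<in> carrier_mat N N" using Ah by (simp add: hermitian_mat_def)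
  obtain Q \<mu> where Q: "unitary_mat N Q" and AQ: "A * Q = Q * diagm N \<mu>"
    using hermitian_diagonalizable[OF Ah] by blast
  define D where "D = diagm N \<mu>"
  have Dc: "D \<in> carrier_mat N N" by (simp add: D_def)
  have Qc: "Q \<in> carrier_mat N N" using Q unitary_carrier by auto
  define QH where "QH = mat_adjoint Q"
  have QHc: "QH \<in> carrier_mat N N" using Qc by (simp add: QH_def)
  have QH: "unitary_mat N QH" unfolding QH_def by (rule unitary_adjoint[OF Q])
  have QQH: "Q * QH = 1\<^sub>m N" unfolding QH_def by (rule unitary_other[OF Q])
  have QHQ: "QH * Q = 1\<^sub>m N" using Q unfolding QH_def unitary_mat_def by simp
  have bound: "cmod (\<mu> i) \<le> l" if i: "i < N" and ne: "\<mu> i \<noteq> 1" for i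
  proof -
    have "col (A * Q) i = col (Q * D) i" using AQ D_def by simp
    have ev: "A *\<^sub>v col Q i = \<mu> i \<cdot>\<^sub>v col Q i"
    proof (rule eq_vecI)
      fix r assume "r < dim_vec (\<mu> i \<cdot>\<^sub>v col Q i)"
      hence r: "r < N" using Qc by simp
      have "(A *\<^sub>v col Q i) $ r = (A * Q) $$ (r, i)" using Ac Qc r i by simp
      also have "\<dots> = (Q * D) $$ (r,i)" using AQ D_def by simp
      also have "\<dots> = Q $$ (r,i) * \<mu> i" unfolding D_def by (rule mult_diagm_index[OF Qc r i])
      finally show "(A *\<^sub>v col Q i) $ r = (\<mu> i \<cdot>\<^sub>v col Q i) $ r" using Qc r i by (simp add: mult.commute)
    qed (use Ac Qc in auto)
    have "eigenvector A (col Q i) (\<mu> i)" unfolding eigenvector_def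
      using ev unitary_col_nonzero[OF Q i] Ac Qc by auto
    hence "\<mu> i \<in> spectrum A" by (auto simp: spectrum_def eigenvalue_def)
    thus ?thesis using spec ne by auto
  qed
  define y where "y = QH *\<^sub>v x"
  have yc: "y \<in> carrier_vec N" using QHc x by (simp add: y_def)
  define y1 where "y1 = vec N (\<lambda>i. if \<mu> i = 1 then y $ i else 0)"
  define y2 where "y2 = vec N (\<lambda>i. if \<mu> i = 1 then 0 else y $ i)"
  have y1c: "y1 \<in> carrier_vec N" and y2c: "y2 \<in> carrier_vec N" by (auto simp: y1_def y2_def)
  have y12: "y1 + y2 = y" using yc by (intro eq_vecI) (auto simp: y1_def y2_def)
  define e where "e = Q *\<^sub>v y1"
  define f where "f = Q *\<^sub>v y2"
  have ec: "e \<in> carrier_vec N" and fc: "f \<in> carrier_vec N" using Qc y1c y2c by (auto simp: e_def f_def)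
  have xQy: "x = Q *\<^sub>v y"
  proof -
    have "Q *\<^sub>v y = (Q * QH) *\<^sub>v x" unfolding y_def using Qc QHc x by simp
    also have "\<dots> = x" using QQH x by simp
    finally show ?thesis by simp
  qed
  have xef: "x = e + f" unfolding e_def f_def xQy y12[symmetric]
    using Qc y1c y2c by (simp add: mult_add_distrib_mat_vec)
  have Dy1: "D *\<^sub>v y1 = y1" unfolding D_def diagm_mult_vec[OF y1c]
    by (intro eq_vecI) (auto simp: y1_def)
  have AQv: "A *\<^sub>v (Q *\<^sub>v w) = Q *\<^sub>v (D *\<^sub>v w)" if w: "w \<in> carrier_vec N" for w
  proof -
    have "A *\<^sub>v (Q *\<^sub>v w) = (A * Q) *\<^sub>v w" using Ac Qc w by simp
    also have "\<dots> = (Q * D) *\<^sub>v w" using AQ D_def by simp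
    also have "\<dots> = Q *\<^sub>v (D *\<^sub>v w)" using Qc Dc w by simp
    finally show ?thesis .
  qed
  have Ae: "A *\<^sub>v e = e" unfolding e_def AQv[OF y1c] Dy1 ..
  have Af: "A *\<^sub>v f = Q *\<^sub>v (D *\<^sub>v y2)" unfolding f_def by (rule AQv[OF y2c])
  have Dy2c: "D *\<^sub>v y2 \<in> carrier_vec N" using Dc y2c by simp
  have nf: "vnorm f = vnorm y2" unfolding f_def by (rule unitary_vnorm[OF Q y2c])
  have nAf: "vnorm (A *\<^sub>v f) = vnorm (D *\<^sub>v y2)" unfolding Af by (rule unitary_vnorm[OF Q Dy2c])
  have "(vnorm (D *\<^sub>v y2))\<^sup>2 \<le> (l * vnorm y2)\<^sup>2"
  proof -
    have "(vnorm (D *\<^sub>v y2))\<^sup>2 = (\<Sum>i<N. (cmod (\<mu> i * y2 $ i))\<^sup>2)"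
      unfolding vnorm_sq D_def diagm_mult_vec[OF y2c] by simp
    also have "\<dots> \<le> (\<Sum>i<N. l\<^sup>2 * (cmod (y2 $ i))\<^sup>2)"
    proof (rule sum_mono)
      fix i assume "i \<in> {..<N}"
      hence i: "i < N" by simp
      show "(cmod (\<mu> i * y2 $ i))\<^sup>2 \<le> l\<^sup>2 * (cmod (y2 $ i))\<^sup>2"
      proof (cases "\<mu> i = 1")
        case True thus ?thesis using i by (simp add: y2_def)
      next
        case False
        hence "cmod (\<mu> i) \<le> l" using bound[OF i] by simp
        hence "(cmod (\<mu> i))\<^sup>2 \<le> l\<^sup>2" by (simp add: power_mono)
        thus ?thesis by (simp add: norm_mult power_mult_distrib mult_right_mono)
      qed
    qed
    also have "\<dots> = (l * vnorm y2)\<^sup>2"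
      using y2c by (simp add: power_mult_distrib vnorm_sq sum_distrib_left)
    finally show ?thesis .
  qed
  hence "vnorm (D *\<^sub>v y2) \<le> l * vnorm y2" by (rule power2_le_imp_le) (use l in auto)
  hence bnd: "vnorm (A *\<^sub>v f) \<le> l * vnorm f" using nf nAf by simp
  have orth: "cinner f z = 0 \<and> cinner (A *\<^sub>v f) z = 0" if z: "z \<in> carrier_vec N" and Az: "A *\<^sub>v z = z" for z
  proof -
    define \<zeta> where "\<zeta> = QH *\<^sub>v z"
    have \<zeta>c: "\<zeta> \<in> carrier_vec N" using QHc z by (simp add: \<zeta>_def)
    have Q\<zeta>: "Q *\<^sub>v \<zeta> = z"
    proof -
      have "Q *\<^sub>v \<zeta> = (Q * QH) *\<^sub>v z" unfolding \<zeta>_def using Qc QHc z by simp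
      thus ?thesis using QQH z by simp
    qed
    have "Q *\<^sub>v (D *\<^sub>v \<zeta>) = z" using AQv[OF \<zeta>c] Q\<zeta> Az by simp
    hence "QH *\<^sub>v (Q *\<^sub>v (D *\<^sub>v \<zeta>)) = \<zeta>" unfolding \<zeta>_def by simp
    moreover have "QH *\<^sub>v (Q *\<^sub>v (D *\<^sub>v \<zeta>)) = D *\<^sub>v \<zeta>"
    proof -
      have "QH *\<^sub>v (Q *\<^sub>v (D *\<^sub>v \<zeta>)) = (QH * Q) *\<^sub>v (D *\<^sub>v \<zeta>)" using QHc Qc Dc \<zeta>c by simp
      thus ?thesis using QHQ Dc \<zeta>c by simp
    qed
    ultimately have D\<zeta>: "D *\<^sub>v \<zeta> = \<zeta>" by simp
    have \<zeta>0: "\<zeta> $ i = 0" if i: "i < N" and ne: "\<mu> i \<noteq> 1" for i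
    proof -
      have "\<mu> i * \<zeta> $ i = \<zeta> $ i" using arg_cong[OF D\<zeta>, of "\<lambda>v. v $ i"] i
        unfolding D_def diagm_mult_vec[OF \<zeta>c] by simp
      hence "(\<mu> i - 1) * \<zeta> $ i = 0" by (simp add: algebra_simps)
      thus ?thesis using ne by simp
    qed
    have "cinner f z = cinner y2 (QH *\<^sub>v z)" unfolding f_def QH_def
      by (rule cinner_adjoint[OF Qc y2c z])
    also have "\<dots> = (\<Sum>i<N. y2 $ i * cnj (\<zeta> $ i))" unfolding \<zeta>_def[symmetric]
      using y2c by (simp add: cinner_def)
    also have "\<dots> = 0" by (intro sum.neutral) (auto simp: y2_def \<zeta>0)
    finally have 1: "cinner f z = 0" .
    have "cinner (A *\<^sub>v f) z = cinner (D *\<^sub>v y2) (QH *\<^sub>v z)" unfolding Af QH_def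
      by (rule cinner_adjoint[OF Qc Dy2c z])
    also have "\<dots> = (\<Sum>i<N. \<mu> i * y2 $ i * cnj (\<zeta> $ i))" unfolding \<zeta>_def[symmetric]
      using y2c by (simp add: cinner_def D_def diagm_mult_vec)
    also have "\<dots> = 0" by (intro sum.neutral) (auto simp: y2_def \<zeta>0)
    finally show ?thesis using 1 by simp
  qed
  have "(vnorm x)\<^sup>2 = (vnorm y)\<^sup>2" unfolding y_def using unitary_vnorm[OF QH x] by simp
  also have "\<dots> = (\<Sum>i<N. (cmod (y $ i))\<^sup>2)" using yc by (simp add: vnorm_sq)
  also have "\<dots> = (\<Sum>i<N. (cmod (y1 $ i))\<^sup>2 + (cmod (y2 $ i))\<^sup>2)"
    by (intro sum.cong) (auto simp: y1_def y2_def)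
  also have "\<dots> = (vnorm y1)\<^sup>2 + (vnorm y2)\<^sup>2" using y1c y2c by (simp add: vnorm_sq sum.distrib)
  also have "\<dots> = (vnorm e)\<^sup>2 + (vnorm f)\<^sup>2"
    unfolding e_def f_def using unitary_vnorm[OF Q y1c] unitary_vnorm[OF Q y2c] by simp
  finally have pyth: "(vnorm x)\<^sup>2 = (vnorm e)\<^sup>2 + (vnorm f)\<^sup>2" .
  show ?thesis using ec fc xef Ae bnd orth pyth by blast
qed


definition Gfun :: "real \<Rightarrow> real \<Rightarrow> real" where
  "Gfun l d = sqrt (1 - (1 - l\<^sup>2) * (1 - d)\<^sup>2 / 4)"

lemma Gfun_bounds: assumes "0 \<le> l" "l < 1" "0 \<le> d" "d < 1"
  shows "0 \<le> Gfun l d" "Gfun l d < 1" "Gfun l d \<le> 1"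
proof -
  have "l\<^sup>2 < 1\<^sup>2" by (rule power_strict_mono) (use assms in auto)
  hence l2: "l\<^sup>2 < 1" by simp
  have d1: "0 < (1 - d)\<^sup>2" using assms by simp
  have "(1 - d)\<^sup>2 \<le> 1\<^sup>2" by (rule power_mono) (use assms in auto)
  hence d2: "(1 - d)\<^sup>2 \<le> 1" by simp
  have p: "0 < (1 - l\<^sup>2) * (1 - d)\<^sup>2" using l2 d1 by simp
  have q: "(1 - l\<^sup>2) * (1 - d)\<^sup>2 \<le> 1"
  proof -
    have "(1 - l\<^sup>2) * (1 - d)\<^sup>2 \<le> 1 * 1" using assms d2
      by (intro mult_mono) auto
    thus ?thesis by simp
  qed
  show "0 \<le> Gfun l d" unfolding Gfun_def using q by simp
  show "Gfun l d < 1" unfolding Gfun_def using p q by simp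
  thus "Gfun l d \<le> 1" by simp
qed

lemma arith_core:
  fixes l d a b s Y p Z :: real
  assumes l0: "0 \<le> l" and l1: "l < 1" and d0: "0 \<le> d" and d1: "d < 1"
    and a0: "0 \<le> a" and b0: "0 \<le> b" and s0: "0 \<le> s" and s2: "s\<^sup>2 = a\<^sup>2 + b\<^sup>2"
    and Y0: "0 \<le> Y" and Y2: "Y\<^sup>2 \<le> a\<^sup>2 + l\<^sup>2 * b\<^sup>2"
    and p0: "0 \<le> p" and pY: "p \<le> Y" and pb: "p \<le> d * a + l * b"
    and Z0: "0 \<le> Z" and Z2: "Z\<^sup>2 \<le> p\<^sup>2 + l\<^sup>2 * (Y\<^sup>2 - p\<^sup>2)"
  shows "Z \<le> Gfun l d * s"
proof -
  have l2: "l\<^sup>2 \<le> 1" using l0 l1 by (simp add: power2_eq_square mult_le_one)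
  have l2': "0 \<le> 1 - l\<^sup>2" using l2 by simp
  have Z2': "Z\<^sup>2 \<le> l\<^sup>2 * Y\<^sup>2 + (1 - l\<^sup>2) * p\<^sup>2" using Z2 by (simp add: algebra_simps)
  have key: "Z\<^sup>2 \<le> (1 - (1 - l\<^sup>2) * (1 - d)\<^sup>2 / 4) * s\<^sup>2"
  proof (cases "(1 - d) * s / 2 \<le> b")
    case True
    have pY2: "p\<^sup>2 \<le> Y\<^sup>2" using p0 pY by (simp add: power_mono)
    have "(1 - l\<^sup>2) * p\<^sup>2 \<le> (1 - l\<^sup>2) * Y\<^sup>2" using pY2 l2' by (rule mult_left_mono)
    hence "Z\<^sup>2 \<le> Y\<^sup>2" using Z2' by (simp add: algebra_simps)
    also have "\<dots> \<le> s\<^sup>2 - (1 - l\<^sup>2) * b\<^sup>2" using Y2 s2 by (simp add: algebra_simps)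
    also have "((1 - d) * s / 2)\<^sup>2 \<le> b\<^sup>2" using True d1 s0 by (intro power_mono) auto
    hence "(1 - l\<^sup>2) * ((1 - d) * s / 2)\<^sup>2 \<le> (1 - l\<^sup>2) * b\<^sup>2" using l2' by (rule mult_left_mono)
    hence "s\<^sup>2 - (1 - l\<^sup>2) * b\<^sup>2 \<le> s\<^sup>2 - (1 - l\<^sup>2) * ((1 - d) * s / 2)\<^sup>2" by simp
    also have "\<dots> = (1 - (1 - l\<^sup>2) * (1 - d)\<^sup>2 / 4) * s\<^sup>2" by (simp add: field_simps power2_eq_square)
    finally show ?thesis .
  next
    case False
    hence bs: "b < (1 - d) * s / 2" by simp
    have as: "a \<le> s" using s2 a0 b0 s0 by (metis le_add_same_cancel1 power2_le_imp_le zero_le_power2)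
    have "p \<le> d * s + b"
    proof -
      have "d * a \<le> d * s" using as d0 by (rule mult_left_mono)
      moreover have "l * b \<le> b" using mult_left_le_one_le[OF b0 l0] l1 by simp
      ultimately show ?thesis using pb by linarith
    qed
    hence ps: "p \<le> (1 + d) * s / 2" using bs by (simp add: algebra_simps)
    have p2: "p\<^sup>2 \<le> ((1 + d) * s / 2)\<^sup>2" using ps p0 by (rule power_mono)
    have "l\<^sup>2 * b\<^sup>2 \<le> b\<^sup>2" using mult_left_le_one_le[of "b\<^sup>2" "l\<^sup>2"] l2 by simp
    hence Ys: "Y\<^sup>2 \<le> s\<^sup>2" using Y2 s2 by simp
    have "Z\<^sup>2 \<le> l\<^sup>2 * s\<^sup>2 + (1 - l\<^sup>2) * ((1 + d) * s / 2)\<^sup>2"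
    proof -
      have "l\<^sup>2 * Y\<^sup>2 \<le> l\<^sup>2 * s\<^sup>2" using Ys by (simp add: mult_left_mono)
      moreover have "(1 - l\<^sup>2) * p\<^sup>2 \<le> (1 - l\<^sup>2) * ((1 + d) * s / 2)\<^sup>2" using p2 l2' by (rule mult_left_mono)
      ultimately show ?thesis using Z2' by linarith
    qed
    also have "\<dots> \<le> (1 - (1 - l\<^sup>2) * (1 - d)\<^sup>2 / 4) * s\<^sup>2"
    proof -
      have dd: "d * d \<le> 1" using d0 d1 by (simp add: mult_le_one)
      have e1: "(1 + d)\<^sup>2 / 4 + (1 - d)\<^sup>2 / 4 = (1 + d * d) / 2" by (simp add: power2_eq_square field_simps)
      have h1: "(1 + d)\<^sup>2 / 4 + (1 - d)\<^sup>2 / 4 \<le> 1" using e1 dd by simp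
      have h2: "0 \<le> (1 - l\<^sup>2) * s\<^sup>2" using l2' by simp
      have "(1 - l\<^sup>2) * s\<^sup>2 * ((1 + d)\<^sup>2 / 4 + (1 - d)\<^sup>2 / 4) \<le> (1 - l\<^sup>2) * s\<^sup>2 * 1"
        by (rule mult_left_mono[OF h1 h2])
      moreover have "l\<^sup>2 * s\<^sup>2 + (1 - l\<^sup>2) * ((1 + d) * s / 2)\<^sup>2 - (1 - (1 - l\<^sup>2) * (1 - d)\<^sup>2 / 4) * s\<^sup>2
        = (1 - l\<^sup>2) * s\<^sup>2 * ((1 + d)\<^sup>2 / 4 + (1 - d)\<^sup>2 / 4) - (1 - l\<^sup>2) * s\<^sup>2 * 1"
        by (simp add: field_simps power2_eq_square)
      ultimately show ?thesis by linarith
    qed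
    finally show ?thesis .
  qed
  have "Z = sqrt (Z\<^sup>2)" using Z0 by simp
  also have "\<dots> \<le> sqrt ((1 - (1 - l\<^sup>2) * (1 - d)\<^sup>2 / 4) * s\<^sup>2)" using key by (rule real_sqrt_le_mono)
  also have "\<dots> = Gfun l d * s" using s0 by (simp add: Gfun_def real_sqrt_mult)
  finally show ?thesis .
qed


lemma pyth_orth: assumes u: "u \<in> carrier_vec N" and w: "w \<in> carrier_vec N" and o: "cinner u w = 0"
  shows "(vnorm (u + w))\<^sup>2 = (vnorm u)\<^sup>2 + (vnorm w)\<^sup>2"
  using vnorm_add_sq[OF u w] o by simp

lemma eigsp_props:
  fixes A :: "complex mat"
  assumes Ac: "A \<in> carrier_mat N N"
  defines "E \<equiv> {v \<in> carrier_vec N. A *\<^sub>v v = v}"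
  shows "E \<subseteq> carrier_vec N" "\<forall>a\<in>E. \<forall>b\<in>E. a - b \<in> E" "\<forall>a\<in>E. \<forall>b\<in>E. a + b \<in> E"
proof -
  show "E \<subseteq> carrier_vec N" unfolding E_def by auto
  show "\<forall>a\<in>E. \<forall>b\<in>E. a - b \<in> E"
  proof (intro ballI)
    fix a b assume "a \<in> E" "b \<in> E"
    hence a: "a \<in> carrier_vec N" "A *\<^sub>v a = a" and b: "b \<in> carrier_vec N" "A *\<^sub>v b = b" unfolding E_def by auto
    have "A *\<^sub>v (a - b) = A *\<^sub>v a - A *\<^sub>v b" using mult_minus_distrib_mat_vec[OF Ac a(1) b(1)] .
    thus "a - b \<in> E" using a b unfolding E_def by auto
  qed
  show "\<forall>a\<in>E. \<forall>b\<in>E. a + b \<in> E"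
  proof (intro ballI)
    fix a b assume "a \<in> E" "b \<in> E"
    hence a: "a \<in> carrier_vec N" "A *\<^sub>v a = a" and b: "b \<in> carrier_vec N" "A *\<^sub>v b = b" unfolding E_def by auto
    have "A *\<^sub>v (a + b) = A *\<^sub>v a + A *\<^sub>v b" using mult_add_distrib_mat_vec[OF Ac a(1) b(1)] .
    thus "a + b \<in> E" using a b unfolding E_def by auto
  qed
qed

lemma proj_facts:
  assumes Ah: "hermitian_mat N A" and l: "0 \<le> l"
  and spec: "\<forall>\<mu>\<in>spectrum A. \<mu> \<noteq> 1 \<longrightarrow> cmod \<mu> \<le> l"
  and u: "u \<in> carrier_vec N"
  defines "E \<equiv> {v \<in> carrier_vec N. A *\<^sub>v v = v}"
  shows "proj E u \<in> E \<and> (\<forall>z\<in>E. cinner (u - proj E u) z = 0) \<and> vnorm (proj E u) \<le> vnorm u"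
proof -
  have Ac: "A \<in> carrier_mat N N" using Ah by (simp add: hermitian_mat_def)
  obtain e f where ec: "e \<in> carrier_vec N" and fc: "f \<in> carrier_vec N" and uef: "u = e + f"
    and Ae: "A *\<^sub>v e = e" and orth: "\<forall>z\<in>carrier_vec N. A *\<^sub>v z = z \<longrightarrow> cinner f z = 0 \<and> cinner (A *\<^sub>v f) z = 0"
    and py: "(vnorm u)\<^sup>2 = (vnorm e)\<^sup>2 + (vnorm f)\<^sup>2"
    using herm_decomp[OF Ah l spec u] by blast
  have eE: "e \<in> E" using ec Ae unfolding E_def by auto
  have ufe: "u - e = f" unfolding uef using ec fc by (intro eq_vecI) auto
  have o: "\<forall>z\<in>E. cinner (u - e) z = 0" unfolding ufe using orth unfolding E_def by auto
  have pe: "proj E u = e"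
    by (rule proj_eq[OF eigsp_props(1)[OF Ac, folded E_def] eigsp_props(2)[OF Ac, folded E_def] u eE o])
  have "(vnorm e)\<^sup>2 \<le> (vnorm u)\<^sup>2" using py by simp
  hence "vnorm e \<le> vnorm u" by (rule power2_le_imp_le) simp
  thus ?thesis using pe eE o by simp
qed

lemma core:
  assumes Ah: "hermitian_mat N A" and U: "unitary_mat N U"
  and l0: "0 \<le> l" and l1: "l < 1" and d0: "0 \<le> d" and d1: "d < 1"
  and spec: "\<forall>\<mu>\<in>spectrum A. \<mu> \<noteq> 1 \<longrightarrow> cmod \<mu> \<le> l"
  and pc: "\<forall>v\<in>{v \<in> carrier_vec N. A *\<^sub>v v = v}.
          vnorm (proj {v \<in> carrier_vec N. A *\<^sub>v v = v} (U *\<^sub>v v)) \<le> d * vnorm v"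
  and x: "x \<in> carrier_vec N"
  shows "vnorm (U *\<^sub>v (A *\<^sub>v (U *\<^sub>v (A *\<^sub>v x)))) \<le> Gfun l d * vnorm x"
proof -
  define E where "E = {v \<in> carrier_vec N. A *\<^sub>v v = v}"
  have Ac: "A \<in> carrier_mat N N" using Ah by (simp add: hermitian_mat_def)
  have Uc: "U \<in> carrier_mat N N" using U unitary_carrier by auto
  note EP = eigsp_props[OF Ac, folded E_def]
  note PF = proj_facts[OF Ah l0 spec, folded E_def]
  have projadd: "proj E (u + w) = proj E u + proj E w" if u: "u \<in> carrier_vec N" and w: "w \<in> carrier_vec N" for u w
  proof -
    have pu: "proj E u \<in> E" "\<forall>z\<in>E. cinner (u - proj E u) z = 0" using PF[OF u] by auto
    have pw: "proj E w \<in> E" "\<forall>z\<in>E. cinner (w - proj E w) z = 0" using PF[OF w] by auto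
    have puc: "proj E u \<in> carrier_vec N" and pwc: "proj E w \<in> carrier_vec N" using pu pw EP by auto
    have sE: "proj E u + proj E w \<in> E" using EP(3) pu pw by auto
    have eq: "(u + w) - (proj E u + proj E w) = (u - proj E u) + (w - proj E w)"
      using u w puc pwc by (intro eq_vecI) auto
    have o: "\<forall>z\<in>E. cinner ((u + w) - (proj E u + proj E w)) z = 0"
    proof
      fix z assume z: "z \<in> E"
      have "cinner ((u + w) - (proj E u + proj E w)) z = cinner (u - proj E u) z + cinner (w - proj E w) z"
        unfolding eq using u w puc pwc by (intro cinner_add_left[of _ N]) auto
      thus "cinner ((u + w) - (proj E u + proj E w)) z = 0" using pu pw z by simp
    qed
    show ?thesis using u w by (intro proj_eq[OF EP(1) EP(2) _ sE o]) auto
  qed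
  obtain e f where ec: "e \<in> carrier_vec N" and fc: "f \<in> carrier_vec N" and xef: "x = e + f"
    and Ae: "A *\<^sub>v e = e" and bnd: "vnorm (A *\<^sub>v f) \<le> l * vnorm f"
    and orth: "\<forall>z\<in>carrier_vec N. A *\<^sub>v z = z \<longrightarrow> cinner f z = 0 \<and> cinner (A *\<^sub>v f) z = 0"
    and py: "(vnorm x)\<^sup>2 = (vnorm e)\<^sup>2 + (vnorm f)\<^sup>2"
    using herm_decomp[OF Ah l0 spec x] by blast
  have Afc: "A *\<^sub>v f \<in> carrier_vec N" using Ac fc by simp
  have eE: "e \<in> E" using ec Ae by (simp add: E_def)
  have Ax: "A *\<^sub>v x = e + A *\<^sub>v f" unfolding xef using mult_add_distrib_mat_vec[OF Ac ec fc] Ae by simp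
  have o1: "cinner e (A *\<^sub>v f) = 0"
  proof -
    have "cinner (A *\<^sub>v f) e = 0" using orth ec Ae by auto
    thus ?thesis using cinner_commute[OF Afc ec] by simp
  qed
  define y where "y = U *\<^sub>v (A *\<^sub>v x)"
  have Axc: "A *\<^sub>v x \<in> carrier_vec N" using Ac x by simp
  have yc: "y \<in> carrier_vec N" using Uc Axc by (simp add: y_def)
  have ny: "vnorm y = vnorm (A *\<^sub>v x)" unfolding y_def by (rule unitary_vnorm[OF U Axc])
  have Y2: "(vnorm y)\<^sup>2 \<le> (vnorm e)\<^sup>2 + l\<^sup>2 * (vnorm f)\<^sup>2"
  proof -
    have "(vnorm y)\<^sup>2 = (vnorm e)\<^sup>2 + (vnorm (A *\<^sub>v f))\<^sup>2" unfolding ny Ax by (rule pyth_orth[OF ec Afc o1])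
    moreover have "(vnorm (A *\<^sub>v f))\<^sup>2 \<le> (l * vnorm f)\<^sup>2" using bnd by (rule power_mono) simp
    ultimately show ?thesis by (simp add: power_mult_distrib)
  qed
  have Uec: "U *\<^sub>v e \<in> carrier_vec N" and UAfc: "U *\<^sub>v (A *\<^sub>v f) \<in> carrier_vec N" using Uc ec Afc by auto
  have ysplit: "y = U *\<^sub>v e + U *\<^sub>v (A *\<^sub>v f)" unfolding y_def Ax using mult_add_distrib_mat_vec[OF Uc ec Afc] .
  have Py: "proj E y = proj E (U *\<^sub>v e) + proj E (U *\<^sub>v (A *\<^sub>v f))" unfolding ysplit by (rule projadd[OF Uec UAfc])
  have P1: "vnorm (proj E (U *\<^sub>v e)) \<le> d * vnorm e" using pc eE unfolding E_def by auto
  have P2: "vnorm (proj E (U *\<^sub>v (A *\<^sub>v f))) \<le> l * vnorm f"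
  proof -
    have "vnorm (proj E (U *\<^sub>v (A *\<^sub>v f))) \<le> vnorm (U *\<^sub>v (A *\<^sub>v f))" using PF[OF UAfc] by simp
    also have "\<dots> = vnorm (A *\<^sub>v f)" by (rule unitary_vnorm[OF U Afc])
    finally show ?thesis using bnd by simp
  qed
  have P1c: "proj E (U *\<^sub>v e) \<in> carrier_vec N" and P2c: "proj E (U *\<^sub>v (A *\<^sub>v f)) \<in> carrier_vec N"
    using PF[OF Uec] PF[OF UAfc] EP(1) by auto
  have pb: "vnorm (proj E y) \<le> d * vnorm e + l * vnorm f"
    unfolding Py using vnorm_triangle[OF P1c P2c] P1 P2 by simp
  have pY: "vnorm (proj E y) \<le> vnorm y" using PF[OF yc] by simp
  obtain e' f' where ec': "e' \<in> carrier_vec N" and fc': "f' \<in> carrier_vec N" and yef: "y = e' + f'"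
    and Ae': "A *\<^sub>v e' = e'" and bnd': "vnorm (A *\<^sub>v f') \<le> l * vnorm f'"
    and orth': "\<forall>z\<in>carrier_vec N. A *\<^sub>v z = z \<longrightarrow> cinner f' z = 0 \<and> cinner (A *\<^sub>v f') z = 0"
    and py': "(vnorm y)\<^sup>2 = (vnorm e')\<^sup>2 + (vnorm f')\<^sup>2"
    using herm_decomp[OF Ah l0 spec yc] by blast
  have eE': "e' \<in> E" using ec' Ae' by (simp add: E_def)
  have yfe: "y - e' = f'" unfolding yef using ec' fc' by (intro eq_vecI) auto
  have pe': "proj E y = e'"
    by (rule proj_eq[OF EP(1) EP(2) yc eE']) (use orth' yfe in \<open>auto simp: E_def\<close>)
  have Afc': "A *\<^sub>v f' \<in> carrier_vec N" using Ac fc' by simp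
  have Ay: "A *\<^sub>v y = e' + A *\<^sub>v f'" unfolding yef using mult_add_distrib_mat_vec[OF Ac ec' fc'] Ae' by simp
  have o2: "cinner e' (A *\<^sub>v f') = 0"
  proof -
    have "cinner (A *\<^sub>v f') e' = 0" using orth' ec' Ae' by auto
    thus ?thesis using cinner_commute[OF Afc' ec'] by simp
  qed
  have Z2: "(vnorm (A *\<^sub>v y))\<^sup>2 \<le> (vnorm e')\<^sup>2 + l\<^sup>2 * ((vnorm y)\<^sup>2 - (vnorm e')\<^sup>2)"
  proof -
    have "(vnorm (A *\<^sub>v y))\<^sup>2 = (vnorm e')\<^sup>2 + (vnorm (A *\<^sub>v f'))\<^sup>2" unfolding Ay by (rule pyth_orth[OF ec' Afc' o2])
    moreover have "(vnorm (A *\<^sub>v f'))\<^sup>2 \<le> (l * vnorm f')\<^sup>2" using bnd' by (rule power_mono) simp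
    ultimately show ?thesis using py' by (simp add: power_mult_distrib)
  qed
  have Ayc: "A *\<^sub>v y \<in> carrier_vec N" using Ac yc by simp
  have final: "vnorm (A *\<^sub>v y) \<le> Gfun l d * vnorm x"
    by (rule arith_core[OF l0 l1 d0 d1 vnorm_ge0 vnorm_ge0 vnorm_ge0 py vnorm_ge0 Y2 vnorm_ge0 pY pb vnorm_ge0])
       (use Z2 pe' in simp)
  have "vnorm (U *\<^sub>v (A *\<^sub>v (U *\<^sub>v (A *\<^sub>v x)))) = vnorm (A *\<^sub>v y)"
    unfolding y_def[symmetric] by (rule unitary_vnorm[OF U Ayc])
  thus ?thesis using final by simp
qed


definition gfun :: "real \<Rightarrow> real \<Rightarrow> real" where
  "gfun l d = (if 0 \<le> l \<and> l < 1 \<and> 0 \<le> d \<and> d < 1 then Gfun l d else 1)"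

lemma gfun_lt1: "0 \<le> l \<Longrightarrow> l < 1 \<Longrightarrow> 0 \<le> d \<Longrightarrow> d < 1 \<Longrightarrow> gfun l d < 1"
  using Gfun_bounds by (simp add: gfun_def)

lemma opnorm_le: assumes M: "M \<in> carrier_mat N N" and c: "0 \<le> c"
  and b: "\<And>x. x \<in> carrier_vec N \<Longrightarrow> vnorm (M *\<^sub>v x) \<le> c * vnorm x"
  shows "opnorm M \<le> c"
  unfolding opnorm_def
proof (rule cSup_least)
  have "vnorm (M *\<^sub>v 0\<^sub>v N) \<in> {vnorm (M *\<^sub>v v) |v. v \<in> carrier_vec (dim_col M) \<and> vnorm v \<le> 1}"
    using M by force
  thus "{vnorm (M *\<^sub>v v) |v. v \<in> carrier_vec (dim_col M) \<and> vnorm v \<le> 1} \<noteq> {}" by blast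
next
  fix s assume "s \<in> {vnorm (M *\<^sub>v v) |v. v \<in> carrier_vec (dim_col M) \<and> vnorm v \<le> 1}"
  then obtain v where v: "v \<in> carrier_vec N" "vnorm v \<le> 1" and s: "s = vnorm (M *\<^sub>v v)" using M by auto
  have "s \<le> c * vnorm v" using b[OF v(1)] s by simp
  also have "\<dots> \<le> c * 1" using v(2) c by (rule mult_left_mono)
  finally show "s \<le> c" by simp
qed

lemma pow_bound: assumes M: "M \<in> carrier_mat N N" and G0: "0 \<le> G"
  and b1: "\<And>x. x \<in> carrier_vec N \<Longrightarrow> vnorm (M *\<^sub>v x) \<le> vnorm x"
  and b2: "\<And>x. x \<in> carrier_vec N \<Longrightarrow> vnorm (M *\<^sub>v (M *\<^sub>v x)) \<le> G * vnorm x"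
  shows "x \<in> carrier_vec N \<Longrightarrow> vnorm ((M ^\<^sub>m j) *\<^sub>v x) \<le> G ^ (j div 2) * vnorm x"
proof (induction j arbitrary: x rule: less_induct)
  case (less j)
  show ?case
  proof (cases j)
    case 0
    thus ?thesis using less.prems M by simp
  next
    case (Suc j1)
    show ?thesis
    proof (cases j1)
      case 0
      have "M ^\<^sub>m j = 1\<^sub>m N * M" using Suc 0 M by simp
      hence "(M ^\<^sub>m j) *\<^sub>v x = M *\<^sub>v x" using M by simp
      thus ?thesis using b1[OF less.prems] Suc 0 by simp
    next
      case (Suc j2)
      have jj: "j = Suc (Suc j2)" using Suc \<open>j = Suc j1\<close> by simp
      have Mx: "M *\<^sub>v x \<in> carrier_vec N" and MMx: "M *\<^sub>v (M *\<^sub>v x) \<in> carrier_vec N" using M less.prems by auto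
      have Pc: "M ^\<^sub>m j2 \<in> carrier_mat N N" using M by simp
      have "(M ^\<^sub>m j) *\<^sub>v x = (M ^\<^sub>m j2 * M * M) *\<^sub>v x" unfolding jj by simp
      also have "\<dots> = (M ^\<^sub>m j2 * M) *\<^sub>v (M *\<^sub>v x)" using Pc M less.prems by (intro assoc_mult_mat_vec) auto
      also have "\<dots> = M ^\<^sub>m j2 *\<^sub>v (M *\<^sub>v (M *\<^sub>v x))" using Pc M Mx by (intro assoc_mult_mat_vec) auto
      finally have eq: "(M ^\<^sub>m j) *\<^sub>v x = M ^\<^sub>m j2 *\<^sub>v (M *\<^sub>v (M *\<^sub>v x))" .
      have "vnorm ((M ^\<^sub>m j) *\<^sub>v x) \<le> G ^ (j2 div 2) * vnorm (M *\<^sub>v (M *\<^sub>v x))"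
        unfolding eq using less.IH[of j2, OF _ MMx] jj by simp
      also have "\<dots> \<le> G ^ (j2 div 2) * (G * vnorm x)"
        using b2[OF less.prems] G0 by (intro mult_left_mono) auto
      also have "\<dots> = G ^ (j div 2) * vnorm x" unfolding jj by simp
      finally show ?thesis .
    qed
  qed
qed

lemma herm_norm_le1: assumes Ah: "hermitian_mat N A"
  and spec: "\<forall>\<mu>\<in>spectrum A. \<mu> \<noteq> 1 \<longrightarrow> cmod \<mu> \<le> 1" and x: "x \<in> carrier_vec N"
  shows "vnorm (A *\<^sub>v x) \<le> vnorm x"
proof -
  have Ac: "A \<in> carrier_mat N N" using Ah by (simp add: hermitian_mat_def)
  obtain e f where ec: "e \<in> carrier_vec N" and fc: "f \<in> carrier_vec N" and xef: "x = e + f"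
    and Ae: "A *\<^sub>v e = e" and bnd: "vnorm (A *\<^sub>v f) \<le> 1 * vnorm f"
    and orth: "\<forall>z\<in>carrier_vec N. A *\<^sub>v z = z \<longrightarrow> cinner f z = 0 \<and> cinner (A *\<^sub>v f) z = 0"
    and py: "(vnorm x)\<^sup>2 = (vnorm e)\<^sup>2 + (vnorm f)\<^sup>2"
    using herm_decomp[OF Ah _ spec x] by force
  have Afc: "A *\<^sub>v f \<in> carrier_vec N" using Ac fc by simp
  have Ax: "A *\<^sub>v x = e + A *\<^sub>v f" unfolding xef using mult_add_distrib_mat_vec[OF Ac ec fc] Ae by simp
  have o1: "cinner e (A *\<^sub>v f) = 0"
  proof -
    have "cinner (A *\<^sub>v f) e = 0" using orth ec Ae by auto
    thus ?thesis using cinner_commute[OF Afc ec] by simp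
  qed
  have "(vnorm (A *\<^sub>v x))\<^sup>2 = (vnorm e)\<^sup>2 + (vnorm (A *\<^sub>v f))\<^sup>2" unfolding Ax by (rule pyth_orth[OF ec Afc o1])
  also have "(vnorm (A *\<^sub>v f))\<^sup>2 \<le> (vnorm f)\<^sup>2" using bnd by (intro power_mono) auto
  finally have "(vnorm (A *\<^sub>v x))\<^sup>2 \<le> (vnorm x)\<^sup>2" using py by simp
  thus ?thesis by (rule power2_le_imp_le) simp
qed

lemma UA_bounds:
  assumes Ah: "hermitian_mat N A" and U: "unitary_mat N U"
  and spec1: "\<forall>\<mu>\<in>spectrum A. \<mu> \<noteq> 1 \<longrightarrow> cmod \<mu> \<le> 1"
  shows "\<And>x. x \<in> carrier_vec N \<Longrightarrow> vnorm ((U * A) *\<^sub>v x) \<le> vnorm x"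
proof -
  fix x :: "complex vec" assume x: "x \<in> carrier_vec N"
  have Ac: "A \<in> carrier_mat N N" using Ah by (simp add: hermitian_mat_def)
  have Uc: "U \<in> carrier_mat N N" using U unitary_carrier by auto
  have "(U * A) *\<^sub>v x = U *\<^sub>v (A *\<^sub>v x)" using Uc Ac x by simp
  moreover have "vnorm (U *\<^sub>v (A *\<^sub>v x)) = vnorm (A *\<^sub>v x)" using Ac x by (intro unitary_vnorm[OF U]) simp
  ultimately show "vnorm ((U * A) *\<^sub>v x) \<le> vnorm x" using herm_norm_le1[OF Ah spec1 x] by simp
qed

lemma shrinkage_gfun: "shrinkage_const gfun"
  unfolding shrinkage_const_def
proof (intro allI impI)
  fix l d N and A U :: "complex mat"
  assume H: "0 \<le> l \<and> l < 1 \<and> 0 \<le> d \<and> d < 1 \<and> hermitian_mat N A \<and> eigenvalue A 1 \<and>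
       (\<forall>\<mu>\<in>spectrum A. \<mu> \<noteq> 1 \<longrightarrow> cmod \<mu> \<le> l) \<and> unitary_mat N U \<and>
       (\<forall>v\<in>{v \<in> carrier_vec N. A *\<^sub>v v = v}.
          vnorm (proj {v \<in> carrier_vec N. A *\<^sub>v v = v} (U *\<^sub>v v)) \<le> d * vnorm v)"
  hence Ah: "hermitian_mat N A" and U: "unitary_mat N U" and l0: "0 \<le> l" and l1: "l < 1"
    and d0: "0 \<le> d" and d1: "d < 1" and spec: "\<forall>\<mu>\<in>spectrum A. \<mu> \<noteq> 1 \<longrightarrow> cmod \<mu> \<le> l"
    and pc: "\<forall>v\<in>{v \<in> carrier_vec N. A *\<^sub>v v = v}.
          vnorm (proj {v \<in> carrier_vec N. A *\<^sub>v v = v} (U *\<^sub>v v)) \<le> d * vnorm v" by auto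
  have Ac: "A \<in> carrier_mat N N" using Ah by (simp add: hermitian_mat_def)
  have Uc: "U \<in> carrier_mat N N" using U unitary_carrier by auto
  have UAc: "U * A \<in> carrier_mat N N" using Uc Ac by simp
  have pw: "(U * A) ^\<^sub>m 2 = (U * A) * (U * A)" using UAc by (simp add: numeral_2_eq_2)
  have "opnorm ((U * A) ^\<^sub>m 2) \<le> Gfun l d"
  proof (rule opnorm_le)
    show "(U * A) ^\<^sub>m 2 \<in> carrier_mat N N" using UAc by simp
    show "0 \<le> Gfun l d" using Gfun_bounds l0 l1 d0 d1 by simp
  next
    fix x :: "complex vec" assume x: "x \<in> carrier_vec N"
    have UAx: "(U * A) *\<^sub>v z = U *\<^sub>v (A *\<^sub>v z)" if z: "z \<in> carrier_vec N" for z
      using assoc_mult_mat_vec[OF Uc Ac z] .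
    have xc2: "(U * A) *\<^sub>v x \<in> carrier_vec N" using UAc x by simp
    have "(U * A) ^\<^sub>m 2 *\<^sub>v x = (U * A) *\<^sub>v ((U * A) *\<^sub>v x)"
      unfolding pw using assoc_mult_mat_vec[OF UAc UAc x] .
    also have "\<dots> = U *\<^sub>v (A *\<^sub>v ((U * A) *\<^sub>v x))" by (rule UAx[OF xc2])
    also have "\<dots> = U *\<^sub>v (A *\<^sub>v (U *\<^sub>v (A *\<^sub>v x)))" by (simp only: UAx[OF x])
    finally have "(U * A) ^\<^sub>m 2 *\<^sub>v x = U *\<^sub>v (A *\<^sub>v (U *\<^sub>v (A *\<^sub>v x)))" .
    thus "vnorm ((U * A) ^\<^sub>m 2 *\<^sub>v x) \<le> Gfun l d * vnorm x"
      using core[OF Ah U l0 l1 d0 d1 spec pc x] by simp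
  qed
  thus "opnorm ((U * A) ^\<^sub>m 2) \<le> gfun l d" using l0 l1 d0 d1 by (simp add: gfun_def)
qed


lemma idx_lt: "a < n \<Longrightarrow> r < k \<Longrightarrow> a * k + r < n * (k::nat)"
proof -
  assume a: "a < n" and r: "r < k"
  have "a * k + r < a * k + k" using r by simp
  also have "\<dots> = Suc a * k" by simp
  also have "\<dots> \<le> n * k" using a by (intro mult_right_mono) auto
  finally show ?thesis .
qed

lemma idx_div: "r < k \<Longrightarrow> (a * k + r) div k = (a::nat)"
  by simp

lemma idx_mod: "r < k \<Longrightarrow> (a * k + r) mod k = (r::nat)"
  by simp

lemma idx_div_lt: "i < n * k \<Longrightarrow> i div k < (n::nat)"
  by (simp add: less_mult_imp_div_less)

lemma idx_mod_lt: "0 < k \<Longrightarrow> i mod k < (k::nat)"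
  by simp

lemma sum_blocks: fixes g :: "nat \<Rightarrow> 'a::comm_monoid_add" and n k :: nat
  shows "(\<Sum>j<n * k. g j) = (\<Sum>b<n. \<Sum>r<k. g (b * k + r))"
proof -
  have "(\<Sum>j<n * k. g j) = (\<Sum>b<n. sum g {b * k..<b * k + k})" using sum.nat_group[of g k n] by simp
  also have "\<dots> = (\<Sum>b<n. \<Sum>r<k. g (b * k + r))"
  proof (rule sum.cong[OF refl])
    fix b
    show "sum g {b * k..<b * k + k} = (\<Sum>r<k. g (b * k + r))"
      using sum.shift_bounds_nat_ivl[of g 0 "b * k" k] by (simp add: atLeast0LessThan add.commute)
  qed
  finally show ?thesis .
qed

lemma diag_block_entries:
  fixes As :: "complex mat list"
  assumes As: "\<forall>B\<in>set As. B \<in> carrier_mat k k" and k: "0 < k"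
  shows "diag_block_mat As \<in> carrier_mat (length As * k) (length As * k) \<and>
    (\<forall>i j. i < length As * k \<longrightarrow> j < length As * k \<longrightarrow>
       diag_block_mat As $$ (i,j) = (if i div k = j div k then (As ! (i div k)) $$ (i mod k, j mod k) else 0))"
  using As
proof (induction As)
  case Nil
  show ?case by simp
next
  case (Cons B Bs)
  define D where "D = diag_block_mat Bs"
  define m where "m = length Bs * k"
  have Bc: "B \<in> carrier_mat k k" using Cons.prems by simp
  have IH: "D \<in> carrier_mat m m"
    "\<And>i j. i < m \<Longrightarrow> j < m \<Longrightarrow> D $$ (i,j) = (if i div k = j div k then (Bs ! (i div k)) $$ (i mod k, j mod k) else 0)"
    using Cons.IH Cons.prems unfolding D_def m_def by auto
  have eq: "diag_block_mat (B # Bs) = four_block_mat B (0\<^sub>m k m) (0\<^sub>m m k) D"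
    using Bc IH(1) by (simp add: D_def Let_def carrier_matD)
  have len: "length (B # Bs) * k = k + m" by (simp add: m_def)
  have carr: "diag_block_mat (B # Bs) \<in> carrier_mat (k + m) (k + m)"
    unfolding eq using four_block_carrier_mat[OF Bc IH(1)] .
  have ent: "diag_block_mat (B # Bs) $$ (i,j) = (if i div k = j div k then ((B # Bs) ! (i div k)) $$ (i mod k, j mod k) else 0)"
    if i: "i < k + m" and j: "j < k + m" for i j
  proof -
    have e1: "diag_block_mat (B # Bs) $$ (i,j) = (if i < k then if j < k then B $$ (i,j) else 0\<^sub>m k m $$ (i, j - k)
      else if j < k then 0\<^sub>m m k $$ (i - k, j) else D $$ (i - k, j - k))"
      unfolding eq using i j Bc IH(1) by (subst index_mat_four_block) (auto simp: carrier_matD)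
    show ?thesis
    proof (cases "i < k")
      case True
      note ik = True
      show ?thesis
      proof (cases "j < k")
        case True
        thus ?thesis using e1 ik by simp
      next
        case False
        have "j div k \<noteq> 0" using False k by (auto simp: div_greater_zero_iff)
        thus ?thesis using e1 ik False j by simp
      qed
    next
      case False
      note ik = False
      have idiv: "i div k = Suc ((i - k) div k)" using ik k by (simp add: le_div_geq)
      have imod: "i mod k = (i - k) mod k" using ik by (simp add: le_mod_geq)
      show ?thesis
      proof (cases "j < k")
        case True
        have "i div k \<noteq> 0" using ik k by (auto simp: div_greater_zero_iff)
        thus ?thesis using e1 ik True i by (simp add: idx_div)
      next
        case False
        have jdiv: "j div k = Suc ((j - k) div k)" using False k by (simp add: le_div_geq)
        have jmod: "j mod k = (j - k) mod k" using False by (simp add: le_mod_geq)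
        have "D $$ (i - k, j - k) = (if (i - k) div k = (j - k) div k then (Bs ! ((i - k) div k)) $$ ((i - k) mod k, (j - k) mod k) else 0)"
          using i j ik False by (intro IH(2)) auto
        thus ?thesis using e1 ik False idiv imod jdiv jmod by simp
      qed
    qed
  qed
  show ?case using carr ent unfolding len by blast
qed

definition blk :: "nat \<Rightarrow> complex vec \<Rightarrow> nat \<Rightarrow> complex vec" where
  "blk k v a = vec k (\<lambda>r. v $ (a * k + r))"

definition slc :: "nat \<Rightarrow> nat \<Rightarrow> complex vec \<Rightarrow> nat \<Rightarrow> complex vec" where
  "slc n k v r = vec n (\<lambda>b. v $ (b * k + r))"

lemma U_apply:
  fixes f :: "nat \<Rightarrow> complex mat"
  assumes f: "\<And>m. m < n \<Longrightarrow> f m \<in> carrier_mat k k" and k: "0 < k"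
  and v: "v \<in> carrier_vec (n * k)" and a: "a < n" and r: "r < k"
  shows "(diag_block_mat (map f [0..<n]) *\<^sub>v v) $ (a * k + r) = (f a *\<^sub>v blk k v a) $ r"
proof -
  define U where "U = diag_block_mat (map f [0..<n])"
  have DB: "U \<in> carrier_mat (n * k) (n * k) \<and>
    (\<forall>i j. i < n * k \<longrightarrow> j < n * k \<longrightarrow>
       U $$ (i,j) = (if i div k = j div k then ((map f [0..<n]) ! (i div k)) $$ (i mod k, j mod k) else 0))"
    unfolding U_def using diag_block_entries[of "map f [0..<n]" k] f k by auto
  have Uc: "U \<in> carrier_mat (n * k) (n * k)" using DB by simp
  have ar: "a * k + r < n * k" using idx_lt[OF a r] .
  have "(U *\<^sub>v v) $ (a * k + r) = (\<Sum>j<n * k. U $$ (a * k + r, j) * v $ j)"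
    using Uc v ar by (simp add: scalar_prod_def atLeast0LessThan)
  also have "\<dots> = (\<Sum>b<n. \<Sum>r'<k. U $$ (a * k + r, b * k + r') * v $ (b * k + r'))" by (rule sum_blocks)
  also have "\<dots> = (\<Sum>b<n. if b = a then (\<Sum>r'<k. f a $$ (r, r') * v $ (a * k + r')) else 0)"
  proof (rule sum.cong[OF refl])
    fix b assume b: "b \<in> {..<n}"
    show "(\<Sum>r'<k. U $$ (a * k + r, b * k + r') * v $ (b * k + r')) =
      (if b = a then (\<Sum>r'<k. f a $$ (r, r') * v $ (a * k + r')) else 0)"
    proof (cases "b = a")
      case True
      have ent: "U $$ (a * k + r, a * k + r') = f a $$ (r, r')" if r': "r' < k" for r'
      proof -
        have "U $$ (a * k + r, a * k + r') = (map f [0..<n] ! a) $$ (r, r')"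
          using DB ar idx_lt[OF a r'] r r' by simp
        thus ?thesis using a by simp
      qed
      have "(\<Sum>r'<k. U $$ (a * k + r, b * k + r') * v $ (b * k + r')) = (\<Sum>r'<k. f a $$ (r, r') * v $ (a * k + r'))"
        using True ent by (intro sum.cong) auto
      thus ?thesis using True by simp
    next
      case False
      have "\<And>r'. r' < k \<Longrightarrow> U $$ (a * k + r, b * k + r') = 0" using DB ar b False r idx_lt by auto
      thus ?thesis using False by simp
    qed
  qed
  also have "\<dots> = (\<Sum>r'<k. f a $$ (r, r') * v $ (a * k + r'))" using a by (simp add: sum.delta')
  also have "\<dots> = (f a *\<^sub>v blk k v a) $ r"
    using f[OF a] r by (simp add: blk_def scalar_prod_def atLeast0LessThan)
  finally show ?thesis unfolding U_def .
qed

lemma kron_entry: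
  fixes M :: "complex mat"
  assumes M: "M \<in> carrier_mat n n" and k: "0 < k" and i: "i < n * k" and j: "j < n * k"
  shows "kron M (1\<^sub>m k) $$ (i,j) = M $$ (i div k, j div k) * (if i mod k = j mod k then 1 else 0)"
  using carrier_matD[OF M] k i j by (simp add: kron_def)

lemma kron_carrier: assumes M: "M \<in> carrier_mat n n" shows "kron M (1\<^sub>m k) \<in> carrier_mat (n * k) (n * k)"
  using carrier_matD[OF M] by (intro carrier_matI) (simp_all add: kron_def)

lemma A_apply:
  fixes M :: "complex mat"
  assumes M: "M \<in> carrier_mat n n" and k: "0 < k"
  and v: "v \<in> carrier_vec (n * k)" and a: "a < n" and r: "r < k"
  shows "((c \<cdot>\<^sub>m kron M (1\<^sub>m k)) *\<^sub>v v) $ (a * k + r) = c * (M *\<^sub>v slc n k v r) $ a"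
proof -
  define K where "K = c \<cdot>\<^sub>m kron M (1\<^sub>m k)"
  have Kc: "K \<in> carrier_mat (n * k) (n * k)" unfolding K_def using kron_carrier[OF M] by simp
  have Ke: "K $$ (i,j) = c * (M $$ (i div k, j div k) * (if i mod k = j mod k then 1 else 0))"
    if "i < n * k" "j < n * k" for i j
    unfolding K_def using kron_entry[OF M k that] carrier_matD[OF kron_carrier[OF M]] that by simp
  have ar: "a * k + r < n * k" using idx_lt[OF a r] .
  have "(K *\<^sub>v v) $ (a * k + r) = (\<Sum>j<n * k. K $$ (a * k + r, j) * v $ j)"
    using Kc v ar by (simp add: scalar_prod_def atLeast0LessThan)
  also have "\<dots> = (\<Sum>b<n. \<Sum>r'<k. K $$ (a * k + r, b * k + r') * v $ (b * k + r'))" by (rule sum_blocks)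
  also have "\<dots> = (\<Sum>b<n. c * M $$ (a, b) * v $ (b * k + r))"
  proof (rule sum.cong[OF refl])
    fix b assume b: "b \<in> {..<n}"
    have "(\<Sum>r'<k. K $$ (a * k + r, b * k + r') * v $ (b * k + r')) =
      (\<Sum>r'<k. if r' = r then c * M $$ (a, b) * v $ (b * k + r) else 0)"
    proof (rule sum.cong[OF refl])
      fix r' assume r': "r' \<in> {..<k}"
      show "K $$ (a * k + r, b * k + r') * v $ (b * k + r') = (if r' = r then c * M $$ (a, b) * v $ (b * k + r) else 0)"
        using Ke[OF ar idx_lt[of b n r' k]] b r' r by auto
    qed
    also have "\<dots> = c * M $$ (a, b) * v $ (b * k + r)" using r by (simp add: sum.delta)
    finally show "(\<Sum>r'<k. K $$ (a * k + r, b * k + r') * v $ (b * k + r')) = c * M $$ (a, b) * v $ (b * k + r)" .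
  qed
  also have "\<dots> = c * (M *\<^sub>v slc n k v r) $ a"
    using M a by (simp add: slc_def scalar_prod_def atLeast0LessThan sum_distrib_left mult.assoc)
  finally show ?thesis unfolding K_def .
qed


lemma adj_carrier: "adj_mat n E \<in> carrier_mat n n"
  by (simp add: adj_mat_def)

lemma adj_entry: "a < n \<Longrightarrow> b < n \<Longrightarrow> adj_mat n E $$ (a,b) = (if E a b then 1 else 0)"
  by (simp add: adj_mat_def)

lemma adj_apply: "y \<in> carrier_vec n \<Longrightarrow> a < n \<Longrightarrow> (adj_mat n E *\<^sub>v y) $ a = (\<Sum>b<n. adj_mat n E $$ (a,b) * y $ b)"
  by (simp add: adj_mat_def scalar_prod_def atLeast0LessThan)

lemma pf_real:
  fixes X y :: "real vec"
  assumes conn: "graph_connected n E"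
  and X: "X \<in> carrier_vec n" and Xp: "\<forall>m<n. 0 < X $ m"
  and AX: "adj_mat n E *\<^sub>v X = lam1 \<cdot>\<^sub>v X"
  and y: "y \<in> carrier_vec n" and Ay: "adj_mat n E *\<^sub>v y = lam1 \<cdot>\<^sub>v y"
  shows "\<exists>c. \<forall>a<n. y $ a = c * X $ a"
proof -
  have n0: "0 < n" using conn by (simp add: graph_connected_def)
  define S where "S = (\<lambda>a. y $ a / X $ a) ` {..<n}"
  have Sfin: "finite S" and Sne: "S \<noteq> {}" using n0 by (auto simp: S_def)
  define c where "c = Min S"
  obtain a0 where a0: "a0 < n" and ca0: "c = y $ a0 / X $ a0"
    using Min_in[OF Sfin Sne] unfolding c_def S_def by auto
  define Z where "Z = (\<lambda>a. y $ a - c * X $ a)"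
  have Z0: "0 \<le> Z a" if a: "a < n" for a
  proof -
    have "c \<le> y $ a / X $ a" unfolding c_def S_def using Sfin a by (intro Min_le) (auto simp: S_def)
    hence "c * X $ a \<le> y $ a" using Xp a by (simp add: pos_le_divide_eq)
    thus ?thesis by (simp add: Z_def)
  qed
  have "X $ a0 > 0" using Xp a0 by simp
  hence Za0: "Z a0 = 0" using ca0 by (simp add: Z_def)
  have AZ: "(\<Sum>b<n. adj_mat n E $$ (a,b) * Z b) = lam1 * Z a" if a: "a < n" for a
  proof -
    have "(\<Sum>b<n. adj_mat n E $$ (a,b) * Z b) = (\<Sum>b<n. adj_mat n E $$ (a,b) * y $ b) - c * (\<Sum>b<n. adj_mat n E $$ (a,b) * X $ b)"
      by (simp add: Z_def algebra_simps sum_subtractf sum_distrib_left)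
    also have "(\<Sum>b<n. adj_mat n E $$ (a,b) * y $ b) = lam1 * y $ a"
      using adj_apply[OF y a, of E] Ay a y by simp
    also have "(\<Sum>b<n. adj_mat n E $$ (a,b) * X $ b) = lam1 * X $ a"
      using adj_apply[OF X a, of E] AX a X by simp
    finally show ?thesis by (simp add: Z_def algebra_simps)
  qed
  have propag: "Z b = 0" if a: "a < n" and b: "b < n" and Eab: "E a b" and Za: "Z a = 0" for a b
  proof -
    have "(\<Sum>b<n. adj_mat n E $$ (a,b) * Z b) = 0" using AZ[OF a] Za by simp
    moreover have "\<forall>b'\<in>{..<n}. 0 \<le> adj_mat n E $$ (a,b') * Z b'"
      using Z0 a by (auto simp: adj_entry)
    ultimately have "\<forall>b'\<in>{..<n}. adj_mat n E $$ (a,b') * Z b' = 0"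
      by (subst (asm) sum_nonneg_eq_0_iff) auto
    hence "adj_mat n E $$ (a,b) * Z b = 0" using b by auto
    thus ?thesis using adj_entry[OF a b, of E] Eab by simp
  qed
  have reach: "Z b = 0" if "(a0, b) \<in> {(x, y). x < n \<and> y < n \<and> E x y}\<^sup>*" for b
    using that
  proof (induction rule: rtrancl_induct)
    case base thus ?case by (rule Za0)
  next
    case (step x z)
    from step.hyps(2) have "x < n" "z < n" "E x z" by auto
    thus ?case using propag step.IH by blast
  qed
  have "\<forall>b<n. y $ b = c * X $ b"
  proof (intro allI impI)
    fix b assume b: "b < n"
    have "(a0, b) \<in> {(x, y). x < n \<and> y < n \<and> E x y}\<^sup>*" using conn a0 b by (simp add: graph_connected_def)
    hence "Z b = 0" by (rule reach)
    thus "y $ b = c * X $ b" by (simp add: Z_def)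
  qed
  thus ?thesis by blast
qed

lemma pf_complex:
  fixes X :: "real vec" and s :: "complex vec"
  assumes conn: "graph_connected n E"
  and X: "X \<in> carrier_vec n" and Xp: "\<forall>m<n. 0 < X $ m"
  and AX: "adj_mat n E *\<^sub>v X = lam1 \<cdot>\<^sub>v X"
  and s: "s \<in> carrier_vec n" and As: "map_mat complex_of_real (adj_mat n E) *\<^sub>v s = complex_of_real lam1 \<cdot>\<^sub>v s"
  shows "\<exists>c. \<forall>a<n. s $ a = c * complex_of_real (X $ a)"
proof -
  define yR where "yR = vec n (\<lambda>a. Re (s $ a))"
  define yI where "yI = vec n (\<lambda>a. Im (s $ a))"
  have yRc: "yR \<in> carrier_vec n" and yIc: "yI \<in> carrier_vec n" by (auto simp: yR_def yI_def)
  have comp: "(\<Sum>b<n. complex_of_real (adj_mat n E $$ (a,b)) * s $ b) = complex_of_real lam1 * s $ a"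
    if a: "a < n" for a
  proof -
    have "(map_mat complex_of_real (adj_mat n E) *\<^sub>v s) $ a = (\<Sum>b<n. complex_of_real (adj_mat n E $$ (a,b)) * s $ b)"
      using s a adj_carrier[of n E] by (simp add: scalar_prod_def atLeast0LessThan carrier_matD)
    thus ?thesis using As a s by simp
  qed
  have ARe: "adj_mat n E *\<^sub>v yR = lam1 \<cdot>\<^sub>v yR"
  proof (rule eq_vecI)
    fix a assume "a < dim_vec (lam1 \<cdot>\<^sub>v yR)"
    hence a: "a < n" by (simp add: yR_def)
    have "(adj_mat n E *\<^sub>v yR) $ a = (\<Sum>b<n. adj_mat n E $$ (a,b) * Re (s $ b))"
      using adj_apply[OF yRc a] by (simp add: yR_def)
    also have "\<dots> = Re (\<Sum>b<n. complex_of_real (adj_mat n E $$ (a,b)) * s $ b)" by (simp add: Re_sum)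
    also have "\<dots> = lam1 * Re (s $ a)" using comp[OF a] by simp
    finally show "(adj_mat n E *\<^sub>v yR) $ a = (lam1 \<cdot>\<^sub>v yR) $ a" using a by (simp add: yR_def)
  qed (simp add: yR_def adj_mat_def)
  have AIm: "adj_mat n E *\<^sub>v yI = lam1 \<cdot>\<^sub>v yI"
  proof (rule eq_vecI)
    fix a assume "a < dim_vec (lam1 \<cdot>\<^sub>v yI)"
    hence a: "a < n" by (simp add: yI_def)
    have "(adj_mat n E *\<^sub>v yI) $ a = (\<Sum>b<n. adj_mat n E $$ (a,b) * Im (s $ b))"
      using adj_apply[OF yIc a] by (simp add: yI_def)
    also have "\<dots> = Im (\<Sum>b<n. complex_of_real (adj_mat n E $$ (a,b)) * s $ b)" by (simp add: Im_sum)
    also have "\<dots> = lam1 * Im (s $ a)" using comp[OF a] by simp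
    finally show "(adj_mat n E *\<^sub>v yI) $ a = (lam1 \<cdot>\<^sub>v yI) $ a" using a by (simp add: yI_def)
  qed (simp add: yI_def adj_mat_def)
  obtain cR where cR: "\<forall>a<n. yR $ a = cR * X $ a" using pf_real[OF conn X Xp AX yRc ARe] by blast
  obtain cI where cI: "\<forall>a<n. yI $ a = cI * X $ a" using pf_real[OF conn X Xp AX yIc AIm] by blast
  have "\<forall>a<n. s $ a = Complex cR cI * complex_of_real (X $ a)"
  proof (intro allI impI)
    fix a assume a: "a < n"
    have "Re (s $ a) = cR * X $ a" "Im (s $ a) = cI * X $ a" using cR cI a by (auto simp: yR_def yI_def)
    thus "s $ a = Complex cR cI * complex_of_real (X $ a)" by (simp add: complex_eq_iff)
  qed
  thus ?thesis by blast
qed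


lemma variance_id:
  fixes p :: "nat \<Rightarrow> real" and u :: "nat \<Rightarrow> complex vec"
  assumes w: "w \<in> carrier_vec k" and u: "\<And>a. a < n \<Longrightarrow> u a \<in> carrier_vec k \<and> vnorm (u a) = vnorm w"
  and ps: "(\<Sum>a<n. p a) = 1"
  defines "c \<equiv> vec k (\<lambda>r. \<Sum>a<n. complex_of_real (p a) * u a $ r)"
  shows "(vnorm c)\<^sup>2 + (\<Sum>a<n. p a * (vnorm (u a - c))\<^sup>2) = (vnorm w)\<^sup>2"
proof -
  have cc: "c \<in> carrier_vec k" by (simp add: c_def)
  have e1: "(vnorm (u a - c))\<^sup>2 = (vnorm w)\<^sup>2 + (vnorm c)\<^sup>2 - 2 * Re (cinner (u a) c)" if a: "a < n" for a
    using vnorm_minus_sq[of "u a" k c] u[OF a] cc by simp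
  have "(\<Sum>a<n. p a * (vnorm (u a - c))\<^sup>2) = (\<Sum>a<n. p a * ((vnorm w)\<^sup>2 + (vnorm c)\<^sup>2) - 2 * (p a * Re (cinner (u a) c)))"
  proof (rule sum.cong[OF refl])
    fix a assume "a \<in> {..<n}"
    hence a: "a < n" by simp
    show "p a * (vnorm (u a - c))\<^sup>2 = p a * ((vnorm w)\<^sup>2 + (vnorm c)\<^sup>2) - 2 * (p a * Re (cinner (u a) c))"
      unfolding e1[OF a] by (simp add: algebra_simps)
  qed
  also have "\<dots> = (\<Sum>a<n. p a) * ((vnorm w)\<^sup>2 + (vnorm c)\<^sup>2) - 2 * (\<Sum>a<n. p a * Re (cinner (u a) c))"
    by (simp only: sum_subtractf sum_distrib_left[symmetric] sum_distrib_right[symmetric])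
  also have "(\<Sum>a<n. p a * Re (cinner (u a) c)) = Re (\<Sum>a<n. complex_of_real (p a) * cinner (u a) c)"
    by (simp add: Re_sum)
  also have "(\<Sum>a<n. complex_of_real (p a) * cinner (u a) c) = cinner c c"
  proof -
    have "(\<Sum>a<n. complex_of_real (p a) * cinner (u a) c) = (\<Sum>a<n. \<Sum>r<k. complex_of_real (p a) * u a $ r * cnj (c $ r))"
    proof (rule sum.cong[OF refl])
      fix a assume "a \<in> {..<n}"
      hence "dim_vec (u a) = k" using u by auto
      thus "complex_of_real (p a) * cinner (u a) c = (\<Sum>r<k. complex_of_real (p a) * u a $ r * cnj (c $ r))"
        by (simp add: cinner_def sum_distrib_left mult.assoc)
    qed
    also have "\<dots> = (\<Sum>r<k. \<Sum>a<n. complex_of_real (p a) * u a $ r * cnj (c $ r))" by (rule sum.swap)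
    also have "\<dots> = (\<Sum>r<k. c $ r * cnj (c $ r))"
      by (intro sum.cong) (auto simp: c_def sum_distrib_right)
    also have "\<dots> = cinner c c" by (simp add: cinner_def c_def)
    finally show ?thesis .
  qed
  finally have "(\<Sum>a<n. p a * (vnorm (u a - c))\<^sup>2) = (vnorm w)\<^sup>2 - (vnorm c)\<^sup>2"
    using ps by (simp add: cinner_self_Re)
  thus ?thesis by simp
qed

lemma sq_sum_le: "(x + y)\<^sup>2 \<le> 2 * (x\<^sup>2 + y\<^sup>2)" for x y :: real
proof -
  have "(x + y)\<^sup>2 + (x - y)\<^sup>2 = 2 * (x\<^sup>2 + y\<^sup>2)" by (simp add: power2_eq_square algebra_simps)
  moreover have "0 \<le> (x - y)\<^sup>2" by simp
  ultimately show ?thesis by linarith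
qed

lemma variance_bound:
  fixes p :: "nat \<Rightarrow> real" and u :: "nat \<Rightarrow> complex vec"
  assumes w: "w \<in> carrier_vec k" and u: "\<And>a. a < n \<Longrightarrow> u a \<in> carrier_vec k \<and> vnorm (u a) = vnorm w"
  and ps: "(\<Sum>a<n. p a) = 1" and p0: "\<And>a. a < n \<Longrightarrow> pmin \<le> p a" and pm0: "0 \<le> pmin"
  and a: "a < n" and b: "b < n" and ab: "a \<noteq> b" and kap0: "0 \<le> \<kappa>"
  and sep: "\<kappa> * vnorm w \<le> vnorm (u b - u a)"
  defines "c \<equiv> vec k (\<lambda>r. \<Sum>a<n. complex_of_real (p a) * u a $ r)"
  shows "vnorm c \<le> (1 - pmin * \<kappa>\<^sup>2 / 8) * vnorm w"
proof -
  have cc: "c \<in> carrier_vec k" by (simp add: c_def)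
  have VI: "(vnorm c)\<^sup>2 + (\<Sum>a<n. p a * (vnorm (u a - c))\<^sup>2) = (vnorm w)\<^sup>2"
    unfolding c_def by (rule variance_id[OF w u ps])
  have pn: "\<And>a. a < n \<Longrightarrow> 0 \<le> p a" using p0 pm0 by (meson order_trans)
  define A where "A = (vnorm (u a - c))\<^sup>2"
  define B where "B = (vnorm (u b - c))\<^sup>2"
  have "p a * A + p b * B = (\<Sum>x\<in>{a,b}. p x * (vnorm (u x - c))\<^sup>2)"
    using ab by (simp add: A_def B_def)
  also have "\<dots> \<le> (\<Sum>x<n. p x * (vnorm (u x - c))\<^sup>2)"
    using a b pn by (intro sum_mono2) auto
  finally have V1: "p a * A + p b * B \<le> (\<Sum>x<n. p x * (vnorm (u x - c))\<^sup>2)" .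
  have m1: "pmin * A \<le> p a * A" using p0[OF a] by (rule mult_right_mono) (simp add: A_def)
  have m2: "pmin * B \<le> p b * B" using p0[OF b] by (rule mult_right_mono) (simp add: B_def)
  have V2: "pmin * (A + B) \<le> p a * A + p b * B" using m1 m2 by (simp add: distrib_left)
  have uac: "u a - c \<in> carrier_vec k" and ubc: "u b - c \<in> carrier_vec k" using u[OF a] u[OF b] cc by auto
  have "(u b - c) - (u a - c) = u b - u a" using u[OF a] u[OF b] cc by (intro eq_vecI) auto
  hence tri: "vnorm (u b - u a) \<le> vnorm (u b - c) + vnorm (u a - c)"
    using vnorm_minus_triangle[OF ubc uac] by simp
  have "(vnorm (u b - u a))\<^sup>2 \<le> (vnorm (u b - c) + vnorm (u a - c))\<^sup>2"
    using tri by (rule power_mono) simp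
  also have "\<dots> \<le> 2 * ((vnorm (u b - c))\<^sup>2 + (vnorm (u a - c))\<^sup>2)" by (rule sq_sum_le)
  finally have V3: "(vnorm (u b - u a))\<^sup>2 \<le> 2 * (A + B)" by (simp add: A_def B_def)
  have "(\<kappa> * vnorm w)\<^sup>2 \<le> (vnorm (u b - u a))\<^sup>2" using sep by (rule power_mono) (use kap0 in simp)
  moreover have "(\<kappa> * vnorm w)\<^sup>2 = \<kappa>\<^sup>2 * (vnorm w)\<^sup>2" by (simp add: power_mult_distrib)
  ultimately have "\<kappa>\<^sup>2 * (vnorm w)\<^sup>2 \<le> 2 * (A + B)" using V3 by linarith
  hence V4: "\<kappa>\<^sup>2 * (vnorm w)\<^sup>2 / 2 \<le> A + B" by simp
  have V5: "pmin * (\<kappa>\<^sup>2 * (vnorm w)\<^sup>2 / 2) \<le> pmin * (A + B)"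
    using V4 pm0 by (rule mult_left_mono)
  have eqk: "(vnorm w)\<^sup>2 * (1 - pmin * \<kappa>\<^sup>2 / 2) = (vnorm w)\<^sup>2 - pmin * (\<kappa>\<^sup>2 * (vnorm w)\<^sup>2 / 2)"
    by (simp add: algebra_simps)
  have key: "(vnorm c)\<^sup>2 \<le> (vnorm w)\<^sup>2 * (1 - pmin * \<kappa>\<^sup>2 / 2)"
    using V1 V2 V5 VI eqk by linarith
  define t where "t = pmin * \<kappa>\<^sup>2 / 2"
  have t0: "0 \<le> t" using pm0 by (simp add: t_def)
  have keyt: "(vnorm c)\<^sup>2 \<le> (vnorm w)\<^sup>2 * (1 - t)" using key by (simp add: t_def)
  show ?thesis
  proof (cases "vnorm w = 0")
    case True
    hence "(vnorm c)\<^sup>2 \<le> 0" using keyt by simp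
    hence "(vnorm c)\<^sup>2 = 0" using zero_le_power2[of "vnorm c"] by linarith
    hence "vnorm c = 0" by simp
    thus ?thesis using True by simp
  next
    case False
    hence wp: "0 < (vnorm w)\<^sup>2" using vnorm_ge0[of w] by simp
    have "0 \<le> (vnorm w)\<^sup>2 * (1 - t)" using order_trans[OF zero_le_power2 keyt] .
    hence t1: "t \<le> 1" using wp by (simp add: zero_le_mult_iff)
    have sq: "(1 - t / 2)\<^sup>2 = (1 - t) + t\<^sup>2 / 4" by (simp add: power2_eq_square field_simps)
    have "1 - t \<le> (1 - t / 2)\<^sup>2" unfolding sq by simp
    hence "(vnorm w)\<^sup>2 * (1 - t) \<le> (vnorm w)\<^sup>2 * (1 - t / 2)\<^sup>2" by (rule mult_left_mono) simp
    also have "\<dots> = ((1 - t / 2) * vnorm w)\<^sup>2" by (simp add: power_mult_distrib)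
    finally have "(vnorm c)\<^sup>2 \<le> ((1 - t / 2) * vnorm w)\<^sup>2" using keyt by linarith
    hence "vnorm c \<le> (1 - t / 2) * vnorm w" by (rule power2_le_imp_le) (use t1 in simp)
    also have "\<dots> \<le> (1 - pmin * \<kappa>\<^sup>2 / 8) * vnorm w"
    proof (rule mult_right_mono)
      show "1 - t / 2 \<le> 1 - pmin * \<kappa>\<^sup>2 / 8" using t0 unfolding t_def by simp
    qed simp
    finally show ?thesis .
  qed
qed


lemma vec_eq_blocks:
  fixes x y :: "complex vec"
  assumes x: "x \<in> carrier_vec (n * k)" and y: "y \<in> carrier_vec (n * k)" and k: "0 < k"
  and e: "\<And>a r. a < n \<Longrightarrow> r < k \<Longrightarrow> x $ (a * k + r) = y $ (a * k + r)"
  shows "x = y"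
proof (rule eq_vecI)
  fix i assume "i < dim_vec y"
  hence i: "i < n * k" using y by simp
  have "i = (i div k) * k + i mod k" by simp
  moreover have "i div k < n" using i by (rule idx_div_lt)
  moreover have "i mod k < k" using k by simp
  ultimately show "x $ i = y $ i" using e by metis
qed (use x y in simp)

locale gsetup =
  fixes n :: nat and E :: "nat \<Rightarrow> nat \<Rightarrow> bool" and lam1 :: real and X :: "real vec"
    and k :: nat and f :: "nat \<Rightarrow> complex mat"
  assumes sg: "simple_graph n E" and conn: "graph_connected n E" and lam1p: "0 < lam1"
  and evX: "eigenvector (adj_mat n E) X lam1" and Xp: "\<forall>m<n. 0 < X $ m"
  and Xn: "(\<Sum>m<n. (X $ m)\<^sup>2) = 1"
  and k0: "0 < k" and fu: "\<And>m. m < n \<Longrightarrow> unitary_mat k (f m)"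
begin

abbreviation "adjC \<equiv> map_mat complex_of_real (adj_mat n E)"
abbreviation "U \<equiv> diag_block_mat (map f [0..<n])"
abbreviation "A \<equiv> complex_of_real (1 / lam1) \<cdot>\<^sub>m kron adjC (1\<^sub>m k)"

lemma n0: "0 < n" using conn by (simp add: graph_connected_def)

lemma Xc: "X \<in> carrier_vec n" and AX: "adj_mat n E *\<^sub>v X = lam1 \<cdot>\<^sub>v X"
  using evX by (auto simp: eigenvector_def adj_mat_def)

lemma adjCc: "adjC \<in> carrier_mat n n" by (simp add: adj_mat_def)

lemma adjC_entry: "a < n \<Longrightarrow> b < n \<Longrightarrow> adjC $$ (a,b) = (if E a b then 1 else 0)"
  by (simp add: adj_mat_def)

lemma fc: "m < n \<Longrightarrow> f m \<in> carrier_mat k k" using fu unitary_carrier by auto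

lemma U_entries: "U \<in> carrier_mat (n * k) (n * k) \<and>
    (\<forall>i j. i < n * k \<longrightarrow> j < n * k \<longrightarrow>
       U $$ (i,j) = (if i div k = j div k then (map f [0..<n] ! (i div k)) $$ (i mod k, j mod k) else 0))"
  using diag_block_entries[of "map f [0..<n]" k] fc k0 by auto

lemma Uc: "U \<in> carrier_mat (n * k) (n * k)" using U_entries by simp

lemma U_ent: "i < n * k \<Longrightarrow> j < n * k \<Longrightarrow>
   U $$ (i,j) = (if i div k = j div k then f (i div k) $$ (i mod k, j mod k) else 0)"
  using U_entries idx_div_lt[of i n k] by auto

lemma U_unitary: "unitary_mat (n * k) U"
proof (rule unitaryI_sum[OF Uc])
  fix i j assume i: "i < n * k" and j: "j < n * k"
  define a where "a = i div k"
  have a: "a < n" using i by (simp add: a_def idx_div_lt)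
  have "(\<Sum>s<n * k. cnj (U $$ (s, i)) * U $$ (s, j)) = (\<Sum>b<n. \<Sum>r<k. cnj (U $$ (b * k + r, i)) * U $$ (b * k + r, j))"
    by (rule sum_blocks)
  also have "\<dots> = (\<Sum>b<n. if b = a then (if i div k = j div k then \<Sum>r<k. cnj (f a $$ (r, i mod k)) * f a $$ (r, j mod k) else 0) else 0)"
  proof (rule sum.cong[OF refl])
    fix b assume b: "b \<in> {..<n}"
    show "(\<Sum>r<k. cnj (U $$ (b * k + r, i)) * U $$ (b * k + r, j)) =
      (if b = a then (if i div k = j div k then \<Sum>r<k. cnj (f a $$ (r, i mod k)) * f a $$ (r, j mod k) else 0) else 0)"
    proof (cases "b = a")
      case True
      show ?thesis
      proof (cases "i div k = j div k")
        case True
        have "(\<Sum>r<k. cnj (U $$ (b * k + r, i)) * U $$ (b * k + r, j)) = (\<Sum>r<k. cnj (f a $$ (r, i mod k)) * f a $$ (r, j mod k))"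
          using \<open>b = a\<close> True b i j by (intro sum.cong refl) (auto simp: U_ent idx_lt a_def)
        thus ?thesis using True \<open>b = a\<close> by simp
      next
        case False
        have "(\<Sum>r<k. cnj (U $$ (b * k + r, i)) * U $$ (b * k + r, j)) = 0"
          using \<open>b = a\<close> False b i j by (intro sum.neutral) (auto simp: U_ent idx_lt a_def)
        thus ?thesis using False \<open>b = a\<close> by simp
      qed
    next
      case False
      have "(\<Sum>r<k. cnj (U $$ (b * k + r, i)) * U $$ (b * k + r, j)) = 0"
        using False b i j by (intro sum.neutral) (auto simp: U_ent idx_lt a_def)
      thus ?thesis using False by simp
    qed
  qed
  also have "\<dots> = (if i div k = j div k then \<Sum>r<k. cnj (f a $$ (r, i mod k)) * f a $$ (r, j mod k) else 0)"
    using a by (simp add: sum.delta')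
  also have "\<dots> = (if i = j then 1 else 0)"
  proof (cases "i div k = j div k")
    case True
    have "(\<Sum>r<k. cnj (f a $$ (r, i mod k)) * f a $$ (r, j mod k)) = (if i mod k = j mod k then 1 else 0)"
      using unitary_sum[OF fu[OF a], of "i mod k" "j mod k"] k0 by simp
    moreover have "(i = j) = (i mod k = j mod k)" using True by (metis div_mult_mod_eq)
    ultimately show ?thesis using True by simp
  next
    case False
    thus ?thesis by auto
  qed
  finally show "(\<Sum>s<n * k. cnj (U $$ (s, i)) * U $$ (s, j)) = (if i = j then 1 else 0)" .
qed

lemma Ac: "A \<in> carrier_mat (n * k) (n * k)"
  using kron_carrier[OF adjCc, of k] by simp

lemma A_ent: "i < n * k \<Longrightarrow> j < n * k \<Longrightarrow>
  A $$ (i,j) = complex_of_real (1 / lam1) * (adjC $$ (i div k, j div k) * (if i mod k = j mod k then 1 else 0))"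
  using kron_entry[OF adjCc k0] carrier_matD[OF kron_carrier[OF adjCc, of k]] by simp

lemma A_herm: "hermitian_mat (n * k) A"
proof (rule hermitianI_entry[OF Ac])
  fix i j assume i: "i < n * k" and j: "j < n * k"
  have a: "i div k < n" and b: "j div k < n" using i j by (auto simp: idx_div_lt)
  have "E (i div k) (j div k) = E (j div k) (i div k)" using sg a b by (simp add: simple_graph_def)
  thus "A $$ (i,j) = cnj (A $$ (j,i))"
    using A_ent[OF i j] A_ent[OF j i] adjC_entry[OF a b] adjC_entry[OF b a] by auto
qed

lemma A_apply': "v \<in> carrier_vec (n * k) \<Longrightarrow> a < n \<Longrightarrow> r < k \<Longrightarrow>
  (A *\<^sub>v v) $ (a * k + r) = complex_of_real (1 / lam1) * (adjC *\<^sub>v slc n k v r) $ a"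
  by (rule A_apply[OF adjCc k0])

lemma U_apply': "v \<in> carrier_vec (n * k) \<Longrightarrow> a < n \<Longrightarrow> r < k \<Longrightarrow>
  (U *\<^sub>v v) $ (a * k + r) = (f a *\<^sub>v blk k v a) $ r"
  by (rule U_apply[OF fc k0])

lemma slc_carrier[simp]: "slc n k v r \<in> carrier_vec n" by (simp add: slc_def)

lemma eig_slice: assumes v: "v \<in> carrier_vec (n * k)" and Av: "A *\<^sub>v v = \<mu> \<cdot>\<^sub>v v" and r: "r < k"
  shows "adjC *\<^sub>v slc n k v r = (\<mu> * complex_of_real lam1) \<cdot>\<^sub>v slc n k v r"
proof (rule eq_vecI)
  fix a assume "a < dim_vec ((\<mu> * complex_of_real lam1) \<cdot>\<^sub>v slc n k v r)"
  hence a: "a < n" by (simp add: slc_def)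
  have "complex_of_real (1 / lam1) * (adjC *\<^sub>v slc n k v r) $ a = (A *\<^sub>v v) $ (a * k + r)"
    using A_apply'[OF v a r] by simp
  also have "\<dots> = \<mu> * v $ (a * k + r)" using Av v idx_lt[OF a r] by simp
  finally have "complex_of_real (1 / lam1) * (adjC *\<^sub>v slc n k v r) $ a = \<mu> * v $ (a * k + r)" .
  hence "(adjC *\<^sub>v slc n k v r) $ a = \<mu> * complex_of_real lam1 * v $ (a * k + r)"
    using lam1p by (simp add: field_simps)
  thus "(adjC *\<^sub>v slc n k v r) $ a = ((\<mu> * complex_of_real lam1) \<cdot>\<^sub>v slc n k v r) $ a"
    using a by (simp add: slc_def)
qed (use adjCc in \<open>simp add: slc_def\<close>)

end


context gsetup begin

lemma spec_bound: assumes mu: "\<mu> \<in> spectrum A" and ne: "\<mu> \<noteq> 1"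
  shows "cmod \<mu> \<le> Max (cmod ` (spectrum adjC - {complex_of_real lam1})) / lam1"
proof -
  obtain v where "eigenvector A v \<mu>" using mu by (auto simp: spectrum_def eigenvalue_def)
  hence v: "v \<in> carrier_vec (n * k)" and v0: "v \<noteq> 0\<^sub>v (n * k)" and Av: "A *\<^sub>v v = \<mu> \<cdot>\<^sub>v v"
    using Ac by (auto simp: eigenvector_def)
  obtain i where i: "i < n * k" and vi: "v $ i \<noteq> 0"
  proof -
    have "\<exists>i < n * k. v $ i \<noteq> 0"
    proof (rule ccontr)
      assume "\<not> (\<exists>i < n * k. v $ i \<noteq> 0)"
      hence "v = 0\<^sub>v (n * k)" using v by (intro eq_vecI) auto
      thus False using v0 by simp
    qed
    thus ?thesis using that by blast
  qed
  define a where "a = i div k"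
  define r where "r = i mod k"
  have a: "a < n" using i by (simp add: a_def idx_div_lt)
  have r: "r < k" using k0 by (simp add: r_def)
  have iar: "i = a * k + r" by (simp add: a_def r_def)
  define s where "s = slc n k v r"
  have s0: "s \<noteq> 0\<^sub>v n"
  proof
    assume "s = 0\<^sub>v n"
    hence "s $ a = 0" using a by simp
    thus False using vi a by (simp add: s_def slc_def iar)
  qed
  have As: "adjC *\<^sub>v s = (\<mu> * complex_of_real lam1) \<cdot>\<^sub>v s" unfolding s_def by (rule eig_slice[OF v Av r])
  have "eigenvector adjC s (\<mu> * complex_of_real lam1)"
    unfolding eigenvector_def using As s0 adjCc by (simp add: s_def carrier_vecI slc_def adj_mat_def)
  hence sp: "\<mu> * complex_of_real lam1 \<in> spectrum adjC" by (auto simp: spectrum_def eigenvalue_def)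
  have "\<mu> * complex_of_real lam1 \<noteq> complex_of_real lam1" using ne lam1p by simp
  hence mem: "cmod (\<mu> * complex_of_real lam1) \<in> cmod ` (spectrum adjC - {complex_of_real lam1})" using sp by blast
  have fin: "finite (cmod ` (spectrum adjC - {complex_of_real lam1}))"
    using card_finite_spectrum(1)[OF adjCc] by simp
  have "cmod \<mu> * lam1 \<le> Max (cmod ` (spectrum adjC - {complex_of_real lam1}))"
    using Max_ge[OF fin mem] lam1p by (simp add: norm_mult)
  thus ?thesis using lam1p by (simp add: pos_le_divide_eq)
qed

definition tens :: "complex vec \<Rightarrow> complex vec" where
  "tens w = vec (n * k) (\<lambda>i. complex_of_real (X $ (i div k)) * w $ (i mod k))"

lemma tens_carrier[simp]: "tens w \<in> carrier_vec (n * k)" by (simp add: tens_def)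

lemma tens_dim[simp]: "dim_vec (tens w) = n * k" by (simp add: tens_def)

lemma tens_idx: "a < n \<Longrightarrow> r < k \<Longrightarrow> tens w $ (a * k + r) = complex_of_real (X $ a) * w $ r"
  by (simp add: tens_def idx_lt)

lemma eigsp_tens: assumes v: "v \<in> carrier_vec (n * k)" and Av: "A *\<^sub>v v = v"
  shows "\<exists>w\<in>carrier_vec k. v = tens w"
proof -
  have ex: "\<forall>r. r < k \<longrightarrow> (\<exists>c. \<forall>a<n. slc n k v r $ a = c * complex_of_real (X $ a))"
  proof (intro allI impI)
    fix r assume r: "r < k"
    have Av1: "A *\<^sub>v v = 1 \<cdot>\<^sub>v v" using Av v by simp
    have "adjC *\<^sub>v slc n k v r = (1 * complex_of_real lam1) \<cdot>\<^sub>v slc n k v r" by (rule eig_slice[OF v Av1 r])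
    hence "adjC *\<^sub>v slc n k v r = complex_of_real lam1 \<cdot>\<^sub>v slc n k v r" by simp
    thus "\<exists>c. \<forall>a<n. slc n k v r $ a = c * complex_of_real (X $ a)"
      by (intro pf_complex[OF conn Xc Xp AX]) auto
  qed
  then obtain cf where cf: "\<And>r a. r < k \<Longrightarrow> a < n \<Longrightarrow> slc n k v r $ a = cf r * complex_of_real (X $ a)"
    by metis
  define w where "w = vec k cf"
  have "v = tens w"
  proof (rule vec_eq_blocks[OF v tens_carrier k0])
    fix a r assume a: "a < n" and r: "r < k"
    have "v $ (a * k + r) = slc n k v r $ a" using a by (simp add: slc_def)
    also have "\<dots> = cf r * complex_of_real (X $ a)" by (rule cf[OF r a])
    finally show "v $ (a * k + r) = tens w $ (a * k + r)" using tens_idx[OF a r] r by (simp add: w_def)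
  qed
  thus ?thesis by (auto simp: w_def)
qed

lemma vnorm_tens: assumes w: "w \<in> carrier_vec k" shows "vnorm (tens w) = vnorm w"
proof -
  have "(vnorm (tens w))\<^sup>2 = (\<Sum>i<n * k. (cmod (tens w $ i))\<^sup>2)" by (simp add: vnorm_sq)
  also have "\<dots> = (\<Sum>a<n. \<Sum>r<k. (cmod (tens w $ (a * k + r)))\<^sup>2)" by (rule sum_blocks)
  also have "\<dots> = (\<Sum>a<n. \<Sum>r<k. (X $ a)\<^sup>2 * (cmod (w $ r))\<^sup>2)"
    by (intro sum.cong refl) (simp add: tens_idx norm_mult power_mult_distrib)
  also have "\<dots> = (\<Sum>a<n. (X $ a)\<^sup>2) * (\<Sum>r<k. (cmod (w $ r))\<^sup>2)" by (simp add: sum_product)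
  also have "\<dots> = (vnorm w)\<^sup>2" using Xn w by (simp add: vnorm_sq)
  finally have "(vnorm (tens w))\<^sup>2 = (vnorm w)\<^sup>2" .
  thus ?thesis by (metis vnorm_ge0 power2_eq_imp_eq)
qed

lemma adjC_X: "a < n \<Longrightarrow> (\<Sum>b<n. adjC $$ (a,b) * complex_of_real (X $ b)) = complex_of_real (lam1 * X $ a)"
proof -
  assume a: "a < n"
  have "(adj_mat n E *\<^sub>v X) $ a = (\<Sum>b<n. adj_mat n E $$ (a,b) * X $ b)" by (rule adj_apply[OF Xc a])
  hence "(\<Sum>b<n. adj_mat n E $$ (a,b) * X $ b) = lam1 * X $ a" using AX a Xc by simp
  hence "complex_of_real (\<Sum>b<n. adj_mat n E $$ (a,b) * X $ b) = complex_of_real (lam1 * X $ a)" by simp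
  moreover have "(\<Sum>b<n. adjC $$ (a,b) * complex_of_real (X $ b)) = complex_of_real (\<Sum>b<n. adj_mat n E $$ (a,b) * X $ b)"
    using a by (simp add: adj_mat_def)
  ultimately show ?thesis by simp
qed

lemma A_tens: assumes w: "w \<in> carrier_vec k" shows "A *\<^sub>v tens w = tens w"
proof (rule vec_eq_blocks[OF _ tens_carrier k0])
  show "A *\<^sub>v tens w \<in> carrier_vec (n * k)" using Ac by simp
next
  fix a r assume a: "a < n" and r: "r < k"
  have "(adjC *\<^sub>v slc n k (tens w) r) $ a = (\<Sum>b<n. adjC $$ (a,b) * (complex_of_real (X $ b) * w $ r))"
    using a adjCc by (simp add: scalar_prod_def atLeast0LessThan slc_def tens_idx r)
  also have "\<dots> = (\<Sum>b<n. adjC $$ (a,b) * complex_of_real (X $ b)) * w $ r"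
    by (simp add: sum_distrib_right mult.assoc)
  also have "\<dots> = complex_of_real (lam1 * X $ a) * w $ r" using adjC_X[OF a] by simp
  finally have "(adjC *\<^sub>v slc n k (tens w) r) $ a = complex_of_real (lam1 * X $ a) * w $ r" .
  hence "(A *\<^sub>v tens w) $ (a * k + r) = complex_of_real (1 / lam1) * (complex_of_real (lam1 * X $ a) * w $ r)"
    using A_apply'[OF tens_carrier a r] by simp
  also have "\<dots> = tens w $ (a * k + r)" using lam1p tens_idx[OF a r] by (simp add: field_simps)
  finally show "(A *\<^sub>v tens w) $ (a * k + r) = tens w $ (a * k + r)" .
qed

end


context gsetup begin

lemma U_tens: assumes w: "w \<in> carrier_vec k" and a: "a < n" and r: "r < k"
  shows "(U *\<^sub>v tens w) $ (a * k + r) = complex_of_real (X $ a) * (f a *\<^sub>v w) $ r"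
proof -
  have "blk k (tens w) a = complex_of_real (X $ a) \<cdot>\<^sub>v w"
    using w a by (intro eq_vecI) (auto simp: blk_def tens_idx)
  hence "(U *\<^sub>v tens w) $ (a * k + r) = (f a *\<^sub>v (complex_of_real (X $ a) \<cdot>\<^sub>v w)) $ r"
    using U_apply'[OF tens_carrier a r] by simp
  also have "f a *\<^sub>v (complex_of_real (X $ a) \<cdot>\<^sub>v w) = complex_of_real (X $ a) \<cdot>\<^sub>v (f a *\<^sub>v w)"
    by (rule mult_mat_vec[OF fc[OF a] w])
  finally show ?thesis using r fc[OF a] by simp
qed

definition pmin :: real where "pmin = Min {(X $ m)\<^sup>2 | m. m < n}"

lemma pmin_props: "0 < pmin" "\<And>a. a < n \<Longrightarrow> pmin \<le> (X $ a)\<^sup>2"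
proof -
  have eq: "{(X $ m)\<^sup>2 | m. m < n} = (\<lambda>m. (X $ m)\<^sup>2) ` {..<n}" by auto
  have fin: "finite {(X $ m)\<^sup>2 | m. m < n}" unfolding eq by simp
  have ne: "{(X $ m)\<^sup>2 | m. m < n} \<noteq> {}" using n0 by auto
  obtain m where m: "m < n" "pmin = (X $ m)\<^sup>2" using Min_in[OF fin ne] unfolding pmin_def by auto
  have "0 < X $ m" using Xp m(1) by simp
  thus "0 < pmin" using m(2) by simp
  show "\<And>a. a < n \<Longrightarrow> pmin \<le> (X $ a)\<^sup>2" unfolding pmin_def using fin by (intro Min_le) auto
qed

lemma proj_bound:
  assumes kap: "0 < \<kappa>"
  and sepv: "\<And>w. w \<in> carrier_vec k \<Longrightarrow> w \<noteq> 0\<^sub>v k \<Longrightarrow> \<exists>a<n. \<exists>b<n. \<kappa> * vnorm w < vnorm (f b *\<^sub>v w - f a *\<^sub>v w)"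
  shows "\<forall>v\<in>{v \<in> carrier_vec (n * k). A *\<^sub>v v = v}.
     vnorm (proj {v \<in> carrier_vec (n * k). A *\<^sub>v v = v} (U *\<^sub>v v)) \<le> (1 - pmin * \<kappa>\<^sup>2 / 8) * vnorm v"
proof
  define Es where "Es = {v \<in> carrier_vec (n * k). A *\<^sub>v v = v}"
  fix v assume "v \<in> {v \<in> carrier_vec (n * k). A *\<^sub>v v = v}"
  hence vc: "v \<in> carrier_vec (n * k)" and Av: "A *\<^sub>v v = v" by auto
  obtain w where w: "w \<in> carrier_vec k" and vw: "v = tens w" using eigsp_tens[OF vc Av] by blast
  define p where "p = (\<lambda>a. (X $ a)\<^sup>2)"
  define uu where "uu = (\<lambda>a. f a *\<^sub>v w)"
  define c where "c = vec k (\<lambda>r. \<Sum>a<n. complex_of_real (p a) * uu a $ r)"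
  have uuc: "uu a \<in> carrier_vec k \<and> vnorm (uu a) = vnorm w" if a: "a < n" for a
    using mult_mat_vec_carrier[OF fc[OF a] w] unitary_vnorm[OF fu[OF a] w] by (simp add: uu_def)
  have ps: "(\<Sum>a<n. p a) = 1" using Xn by (simp add: p_def)
  have cc: "c \<in> carrier_vec k" by (simp add: c_def)
  have EP: "Es \<subseteq> carrier_vec (n * k)" "\<forall>a\<in>Es. \<forall>b\<in>Es. a - b \<in> Es"
    using eigsp_props[OF Ac] unfolding Es_def by auto
  have Uvc: "U *\<^sub>v v \<in> carrier_vec (n * k)" using Uc vc by simp
  have PE: "tens c \<in> Es" using A_tens[OF cc] by (simp add: Es_def)
  have orth: "\<forall>z\<in>Es. cinner (U *\<^sub>v v - tens c) z = 0"
  proof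
    fix z assume "z \<in> Es"
    hence zc: "z \<in> carrier_vec (n * k)" and Az: "A *\<^sub>v z = z" by (auto simp: Es_def)
    obtain w' where w': "w' \<in> carrier_vec k" and zw: "z = tens w'" using eigsp_tens[OF zc Az] by blast
    have "cinner (U *\<^sub>v v - tens c) z = (\<Sum>i<n * k. (U *\<^sub>v v - tens c) $ i * cnj (z $ i))"
      using Uvc by (simp add: cinner_def)
    also have "\<dots> = (\<Sum>a<n. \<Sum>r<k. (U *\<^sub>v v - tens c) $ (a * k + r) * cnj (z $ (a * k + r)))" by (rule sum_blocks)
    also have "\<dots> = (\<Sum>a<n. \<Sum>r<k. complex_of_real (p a) * (uu a $ r - c $ r) * cnj (w' $ r))"
    proof (intro sum.cong refl)
      fix a r assume "a \<in> {..<n}" "r \<in> {..<k}"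
      hence a: "a < n" and r: "r < k" by auto
      have e1: "(U *\<^sub>v v - tens c) $ (a * k + r) = complex_of_real (X $ a) * uu a $ r - complex_of_real (X $ a) * c $ r"
        using Uvc idx_lt[OF a r] U_tens[OF w a r] tens_idx[OF a r] vw by (simp add: uu_def)
      have e2: "z $ (a * k + r) = complex_of_real (X $ a) * w' $ r" using tens_idx[OF a r] zw by simp
      show "(U *\<^sub>v v - tens c) $ (a * k + r) * cnj (z $ (a * k + r)) =
        complex_of_real (p a) * (uu a $ r - c $ r) * cnj (w' $ r)"
        unfolding e1 e2 by (simp add: p_def algebra_simps power2_eq_square)
    qed
    also have "\<dots> = (\<Sum>r<k. \<Sum>a<n. complex_of_real (p a) * (uu a $ r - c $ r) * cnj (w' $ r))" by (rule sum.swap)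
    also have "\<dots> = 0"
    proof (rule sum.neutral, intro ballI)
      fix r assume "r \<in> {..<k}"
      hence r: "r < k" by simp
      have eq: "(\<Sum>a<n. complex_of_real (p a) * (uu a $ r - c $ r) * cnj (w' $ r)) =
        ((\<Sum>a<n. complex_of_real (p a) * uu a $ r) - (\<Sum>a<n. complex_of_real (p a)) * c $ r) * cnj (w' $ r)"
        by (simp add: algebra_simps sum_subtractf sum_distrib_left sum_distrib_right)
      have s1: "(\<Sum>a<n. complex_of_real (p a)) = 1" using ps by (metis of_real_1 of_real_sum)
      have s2: "(\<Sum>a<n. complex_of_real (p a) * uu a $ r) = c $ r" using r by (simp add: c_def)
      show "(\<Sum>a<n. complex_of_real (p a) * (uu a $ r - c $ r) * cnj (w' $ r)) = 0"
        unfolding eq s1 s2 by simp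
    qed
    finally show "cinner (U *\<^sub>v v - tens c) z = 0" .
  qed
  have pj: "proj Es (U *\<^sub>v v) = tens c" by (rule proj_eq[OF EP(1) EP(2) Uvc PE orth])
  have "vnorm c \<le> (1 - pmin * \<kappa>\<^sup>2 / 8) * vnorm w"
  proof (cases "w = 0\<^sub>v k")
    case True
    have z: "uu a $ i = 0" if a: "a < n" and i: "i < k" for a i
    proof -
      have "uu a $ i = row (f a) i \<bullet> 0\<^sub>v k" using True fc[OF a] i by (simp add: uu_def)
      also have "\<dots> = 0" using fc[OF a] by (intro scalar_prod_right_zero) (simp add: row_def)
      finally show ?thesis .
    qed
    hence "c = 0\<^sub>v k" by (intro eq_vecI) (auto simp: c_def)
    thus ?thesis using True by simp
  next
    case False
    obtain a b where a: "a < n" and b: "b < n" and sab: "\<kappa> * vnorm w < vnorm (f b *\<^sub>v w - f a *\<^sub>v w)"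
      using sepv[OF w False] by blast
    have ab: "a \<noteq> b"
    proof
      assume "a = b"
      hence "f b *\<^sub>v w - f a *\<^sub>v w = 0\<^sub>v k" using fc[OF a] w by (intro eq_vecI) auto
      hence "\<kappa> * vnorm w < 0" using sab by simp
      moreover have "0 \<le> \<kappa> * vnorm w" using kap by simp
      ultimately show False by simp
    qed
    show ?thesis unfolding c_def
      by (rule variance_bound[OF w uuc ps _ _ a b ab]) (use pmin_props kap sab in \<open>auto simp: p_def uu_def\<close>)
  qed
  thus "vnorm (proj {v \<in> carrier_vec (n * k). A *\<^sub>v v = v} (U *\<^sub>v v)) \<le> (1 - pmin * \<kappa>\<^sup>2 / 8) * vnorm v"
    using pj vnorm_tens[OF cc] vnorm_tens[OF w] vw unfolding Es_def by simp
qed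

end


lemma main_part:
  fixes \<Gamma> :: "('g, 'b) monoid_scheme" and t :: "nat \<Rightarrow> 'g" and \<rho> :: "'g \<Rightarrow> complex mat"
  assumes sg: "simple_graph n E" and conn: "graph_connected n E"
  and lam1p: "0 < lam1" and evX: "eigenvector (adj_mat n E) X lam1" and Xp: "\<forall>m<n. 0 < X $ m"
  and Xn: "(\<Sum>m<n. (X $ m)\<^sup>2) = 1"
  and lamlt: "Max (cmod ` (spectrum (map_mat complex_of_real (adj_mat n E)) - {complex_of_real lam1})) / lam1 < 1"
  and grp: "group \<Gamma>" and tc: "\<forall>m<n. t m \<in> carrier \<Gamma>" and kap: "0 < \<kappa>"
  and sepH: "\<forall>u\<in>carrier_vec k. vnorm u = 1 \<longrightarrow>
              (\<exists>s\<in>{inv\<^bsub>\<Gamma>\<^esub> (t a) \<otimes>\<^bsub>\<Gamma>\<^esub> t b | a b. a < n \<and> b < n}. vnorm (\<rho> s *\<^sub>v u - u) > \<kappa>)"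
  and irr: "irreducible_rep \<Gamma> k \<rho>"
  shows "opnorm ((diag_block_mat (map (\<lambda>m. \<rho> (t m)) [0..<n]) *
      ((complex_of_real (1 / lam1)) \<cdot>\<^sub>m kron (map_mat complex_of_real (adj_mat n E)) (1\<^sub>m k))) ^\<^sub>m j)
    \<le> gfun (Max (cmod ` (spectrum (map_mat complex_of_real (adj_mat n E)) - {complex_of_real lam1})) / lam1)
            (1 - Min {(X $ m)\<^sup>2 | m. m < n} * \<kappa>\<^sup>2 / 8) ^ (j div 2)"
proof -
  have ur: "unitary_rep \<Gamma> k \<rho>" and k0: "0 < k" using irr by (auto simp: irreducible_rep_def)
  have rU: "\<And>g. g \<in> carrier \<Gamma> \<Longrightarrow> unitary_mat k (\<rho> g)" using ur by (auto simp: unitary_rep_def)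
  have rH: "\<And>g h. g \<in> carrier \<Gamma> \<Longrightarrow> h \<in> carrier \<Gamma> \<Longrightarrow> \<rho> (g \<otimes>\<^bsub>\<Gamma>\<^esub> h) = \<rho> g * \<rho> h"
    using ur by (auto simp: unitary_rep_def)
  have rC: "\<And>g. g \<in> carrier \<Gamma> \<Longrightarrow> \<rho> g \<in> carrier_mat k k" using rU unitary_carrier by auto
  define f where "f = (\<lambda>m. \<rho> (t m))"
  have fu: "\<And>m. m < n \<Longrightarrow> unitary_mat k (f m)" using rU tc by (simp add: f_def)
  interpret G: gsetup n E lam1 X k f
    by (unfold_locales) (use sg conn lam1p evX Xp Xn k0 fu in auto)
  have one: "\<one>\<^bsub>\<Gamma>\<^esub> \<in> carrier \<Gamma>" using grp by (simp add: group.is_monoid monoid.one_closed)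
  have r1: "\<rho> \<one>\<^bsub>\<Gamma>\<^esub> = 1\<^sub>m k"
  proof -
    have "\<rho> \<one>\<^bsub>\<Gamma>\<^esub> = \<rho> \<one>\<^bsub>\<Gamma>\<^esub> * \<rho> \<one>\<^bsub>\<Gamma>\<^esub>" using rH[OF one one] grp one by (simp add: group.is_monoid monoid.l_one)
    hence "mat_adjoint (\<rho> \<one>\<^bsub>\<Gamma>\<^esub>) * \<rho> \<one>\<^bsub>\<Gamma>\<^esub> = mat_adjoint (\<rho> \<one>\<^bsub>\<Gamma>\<^esub>) * (\<rho> \<one>\<^bsub>\<Gamma>\<^esub> * \<rho> \<one>\<^bsub>\<Gamma>\<^esub>)" by simp
    also have "\<dots> = (mat_adjoint (\<rho> \<one>\<^bsub>\<Gamma>\<^esub>) * \<rho> \<one>\<^bsub>\<Gamma>\<^esub>) * \<rho> \<one>\<^bsub>\<Gamma>\<^esub>"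
      using rC[OF one] by (simp add: assoc_mult_mat[of _ k k _ k _ k])
    finally have "1\<^sub>m k = 1\<^sub>m k * \<rho> \<one>\<^bsub>\<Gamma>\<^esub>" using rU[OF one] by (simp add: unitary_mat_def)
    thus ?thesis using rC[OF one] by simp
  qed
  have rinv: "\<rho> g * \<rho> (inv\<^bsub>\<Gamma>\<^esub> g) = 1\<^sub>m k" if g: "g \<in> carrier \<Gamma>" for g
  proof -
    have ig: "inv\<^bsub>\<Gamma>\<^esub> g \<in> carrier \<Gamma>" using grp g by (simp add: group.inv_closed)
    have "\<rho> g * \<rho> (inv\<^bsub>\<Gamma>\<^esub> g) = \<rho> (g \<otimes>\<^bsub>\<Gamma>\<^esub> inv\<^bsub>\<Gamma>\<^esub> g)" using rH[OF g ig] by simp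
    also have "g \<otimes>\<^bsub>\<Gamma>\<^esub> inv\<^bsub>\<Gamma>\<^esub> g = \<one>\<^bsub>\<Gamma>\<^esub>" using grp g by (simp add: group.r_inv)
    finally show ?thesis using r1 by simp
  qed
  have sepv: "\<exists>a<n. \<exists>b<n. \<kappa> * vnorm w < vnorm (f b *\<^sub>v w - f a *\<^sub>v w)"
    if w: "w \<in> carrier_vec k" and w0: "w \<noteq> 0\<^sub>v k" for w
  proof -
    have nw: "vnorm w > 0" using vnorm_eq_0[OF w] w0 vnorm_ge0[of w] by linarith
    define u0 where "u0 = complex_of_real (1 / vnorm w) \<cdot>\<^sub>v w"
    have u0c: "u0 \<in> carrier_vec k" using w by (simp add: u0_def)
    have nu0: "vnorm u0 = 1" using nw by (simp add: u0_def vnorm_smult norm_divide)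
    obtain s where sS: "s \<in> {inv\<^bsub>\<Gamma>\<^esub> (t a) \<otimes>\<^bsub>\<Gamma>\<^esub> t b | a b. a < n \<and> b < n}" and ss: "vnorm (\<rho> s *\<^sub>v u0 - u0) > \<kappa>"
      using sepH u0c nu0 by blast
    then obtain a b where a: "a < n" and b: "b < n" and sab: "s = inv\<^bsub>\<Gamma>\<^esub> (t a) \<otimes>\<^bsub>\<Gamma>\<^esub> t b" by blast
    have ta: "t a \<in> carrier \<Gamma>" and tb: "t b \<in> carrier \<Gamma>" using tc a b by auto
    have ita: "inv\<^bsub>\<Gamma>\<^esub> (t a) \<in> carrier \<Gamma>" using grp ta by (simp add: group.inv_closed)
    have rs: "\<rho> s = \<rho> (inv\<^bsub>\<Gamma>\<^esub> (t a)) * \<rho> (t b)" using rH[OF ita tb] sab by simp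
    have Ca: "\<rho> (t a) \<in> carrier_mat k k" and Cb: "\<rho> (t b) \<in> carrier_mat k k" and Ci: "\<rho> (inv\<^bsub>\<Gamma>\<^esub> (t a)) \<in> carrier_mat k k"
      using rC ta tb ita by auto

    have rsC: "\<rho> s \<in> carrier_mat k k" unfolding rs by (rule mult_carrier_mat[OF Ci Cb])
    have rsu: "\<rho> s *\<^sub>v u0 \<in> carrier_vec k" using rsC u0c by simp
    have "\<rho> (t a) *\<^sub>v (\<rho> s *\<^sub>v u0) = (\<rho> (t a) * \<rho> s) *\<^sub>v u0" using assoc_mult_mat_vec[OF Ca rsC u0c] by simp
    also have "\<rho> (t a) * \<rho> s = (\<rho> (t a) * \<rho> (inv\<^bsub>\<Gamma>\<^esub> (t a))) * \<rho> (t b)"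
      unfolding rs using Ca Ci Cb by (simp add: assoc_mult_mat[of _ k k _ k _ k])
    also have "\<dots> = \<rho> (t b)" using rinv[OF ta] Cb by simp
    finally have e1: "\<rho> (t a) *\<^sub>v (\<rho> s *\<^sub>v u0) = \<rho> (t b) *\<^sub>v u0" .
    have "vnorm (\<rho> s *\<^sub>v u0 - u0) = vnorm (\<rho> (t a) *\<^sub>v (\<rho> s *\<^sub>v u0 - u0))"
      using unitary_vnorm[OF rU[OF ta], of "\<rho> s *\<^sub>v u0 - u0"] rsu u0c by simp
    also have "\<rho> (t a) *\<^sub>v (\<rho> s *\<^sub>v u0 - u0) = \<rho> (t b) *\<^sub>v u0 - \<rho> (t a) *\<^sub>v u0"
      using mult_minus_distrib_mat_vec[OF Ca rsu u0c] e1 by simp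
    finally have gt: "\<kappa> < vnorm (f b *\<^sub>v u0 - f a *\<^sub>v u0)" using ss by (simp add: f_def)
    have wu: "w = complex_of_real (vnorm w) \<cdot>\<^sub>v u0" using nw w by (intro eq_vecI) (auto simp: u0_def)
    have "f b *\<^sub>v w - f a *\<^sub>v w = complex_of_real (vnorm w) \<cdot>\<^sub>v (f b *\<^sub>v u0 - f a *\<^sub>v u0)"
    proof -
      have fb: "f b *\<^sub>v w = complex_of_real (vnorm w) \<cdot>\<^sub>v (f b *\<^sub>v u0)"
        using mult_mat_vec[OF Cb u0c, of "complex_of_real (vnorm w)"] wu by (simp add: f_def)
      have fa: "f a *\<^sub>v w = complex_of_real (vnorm w) \<cdot>\<^sub>v (f a *\<^sub>v u0)"
        using mult_mat_vec[OF Ca u0c, of "complex_of_real (vnorm w)"] wu by (simp add: f_def)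
      show ?thesis unfolding fa fb using Ca Cb u0c by (intro eq_vecI) (auto simp: f_def algebra_simps)
    qed
    hence "vnorm (f b *\<^sub>v w - f a *\<^sub>v w) = vnorm w * vnorm (f b *\<^sub>v u0 - f a *\<^sub>v u0)"
      by (simp add: vnorm_smult)
    moreover have "\<kappa> * vnorm w < vnorm w * vnorm (f b *\<^sub>v u0 - f a *\<^sub>v u0)"
      using gt nw by (simp add: mult.commute)
    ultimately have "\<kappa> * vnorm w < vnorm (f b *\<^sub>v w - f a *\<^sub>v w)" by simp
    thus ?thesis using a b by blast
  qed
  define lam where "lam = Max (cmod ` (spectrum (map_mat complex_of_real (adj_mat n E)) - {complex_of_real lam1})) / lam1"
  define d where "d = 1 - Min {(X $ m)\<^sup>2 | m. m < n} * \<kappa>\<^sup>2 / 8"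
  have dd: "d = 1 - G.pmin * \<kappa>\<^sup>2 / 8" by (simp add: d_def G.pmin_def)
  have d1: "d < 1" using G.pmin_props(1) kap unfolding dd by simp
  have lam1': "lam < 1" using lamlt by (simp add: lam_def)
  have pc: "\<forall>v\<in>{v \<in> carrier_vec (n * k). G.A *\<^sub>v v = v}.
     vnorm (proj {v \<in> carrier_vec (n * k). G.A *\<^sub>v v = v} (G.U *\<^sub>v v)) \<le> d * vnorm v"
    unfolding dd by (rule G.proj_bound[OF kap sepv]) auto
  have spec: "\<forall>\<mu>\<in>spectrum G.A. \<mu> \<noteq> 1 \<longrightarrow> cmod \<mu> \<le> lam"
    using G.spec_bound by (simp add: lam_def)
  have spec1: "\<forall>\<mu>\<in>spectrum G.A. \<mu> \<noteq> 1 \<longrightarrow> cmod \<mu> \<le> 1"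
    using spec lam1' by force
  have Ac: "G.A \<in> carrier_mat (n * k) (n * k)" by (rule G.Ac)
  have Uc: "G.U \<in> carrier_mat (n * k) (n * k)" by (rule G.Uc)
  have UAc: "G.U * G.A \<in> carrier_mat (n * k) (n * k)" using Ac Uc by simp
  have b1: "\<And>x. x \<in> carrier_vec (n * k) \<Longrightarrow> vnorm ((G.U * G.A) *\<^sub>v x) \<le> vnorm x"
    by (rule UA_bounds[OF G.A_herm G.U_unitary spec1])
  have UAx: "(G.U * G.A) *\<^sub>v z = G.U *\<^sub>v (G.A *\<^sub>v z)" if z: "z \<in> carrier_vec (n * k)" for z
    using assoc_mult_mat_vec[OF Uc Ac z] .
  have main: "opnorm ((G.U * G.A) ^\<^sub>m j) \<le> gfun lam d ^ (j div 2)"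
  proof (cases "0 \<le> lam \<and> 0 \<le> d")
    case True
    hence gg: "gfun lam d = Gfun lam d" using lam1' d1 by (simp add: gfun_def)
    have G0: "0 \<le> Gfun lam d" using Gfun_bounds True lam1' d1 by simp
    have b2: "vnorm ((G.U * G.A) *\<^sub>v ((G.U * G.A) *\<^sub>v x)) \<le> Gfun lam d * vnorm x"
      if x: "x \<in> carrier_vec (n * k)" for x
    proof -
      have xc: "(G.U * G.A) *\<^sub>v x \<in> carrier_vec (n * k)" using UAc x by simp
      have "(G.U * G.A) *\<^sub>v ((G.U * G.A) *\<^sub>v x) = G.U *\<^sub>v (G.A *\<^sub>v ((G.U * G.A) *\<^sub>v x))"
        by (rule UAx[OF xc])
      also have "\<dots> = G.U *\<^sub>v (G.A *\<^sub>v (G.U *\<^sub>v (G.A *\<^sub>v x)))"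
        by (simp only: UAx[OF x])
      finally have "(G.U * G.A) *\<^sub>v ((G.U * G.A) *\<^sub>v x) = G.U *\<^sub>v (G.A *\<^sub>v (G.U *\<^sub>v (G.A *\<^sub>v x)))" .
      thus ?thesis using core[OF G.A_herm G.U_unitary _ lam1' _ d1 spec pc x] True by simp
    qed
    show ?thesis unfolding gg
      by (rule opnorm_le) (use UAc G0 pow_bound[OF UAc G0 b1 b2] in auto)
  next
    case False
    hence gg: "gfun lam d = 1" by (auto simp: gfun_def)
    have b2: "vnorm ((G.U * G.A) *\<^sub>v ((G.U * G.A) *\<^sub>v x)) \<le> 1 * vnorm x"
      if x: "x \<in> carrier_vec (n * k)" for x
    proof -
      have xc: "(G.U * G.A) *\<^sub>v x \<in> carrier_vec (n * k)" using UAc x by simp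
      show ?thesis using b1[OF xc] b1[OF x] by simp
    qed
    have "vnorm ((G.U * G.A) ^\<^sub>m j *\<^sub>v x) \<le> 1 ^ (j div 2) * vnorm x" if x: "x \<in> carrier_vec (n * k)" for x
      by (rule pow_bound[OF UAc _ b1 b2 x]) simp
    thus ?thesis unfolding gg by (intro opnorm_le) (use UAc in auto)
  qed
  thus ?thesis unfolding lam_def d_def f_def .
qed

theorem mainTheorem11:
  "\<exists>g :: real \<Rightarrow> real \<Rightarrow> real.
     (\<forall>l d. 0 \<le> l \<and> l < 1 \<and> 0 \<le> d \<and> d < 1 \<longrightarrow> g l d < 1) \<and>
     shrinkage_const g \<and>
     (\<forall>(n::nat) E (lam1::real) (X::real vec) (\<Gamma>::('g, 'b) monoid_scheme) (t::nat \<Rightarrow> 'g) (\<kappa>::real).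
        simple_graph n E \<and> graph_connected n E \<and>
        lam1 = spectral_radius (map_mat complex_of_real (adj_mat n E)) \<and> 0 < lam1 \<and>
        eigenvector (adj_mat n E) X lam1 \<and> (\<forall>m<n. 0 < X $ m) \<and> (\<Sum>m<n. (X $ m)\<^sup>2) = 1 \<and>
        Max (cmod ` (spectrum (map_mat complex_of_real (adj_mat n E)) - {complex_of_real lam1})) / lam1 < 1 \<and>
        group \<Gamma> \<and> (\<forall>m<n. t m \<in> carrier \<Gamma>) \<and>
        generate \<Gamma> {inv\<^bsub>\<Gamma>\<^esub> (t a) \<otimes>\<^bsub>\<Gamma>\<^esub> t b | a b. a < n \<and> b < n} = carrier \<Gamma> \<and>
        0 < \<kappa> \<and>
        (\<forall>k (\<rho>::'g \<Rightarrow> complex mat).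
           irreducible_rep \<Gamma> k \<rho> \<and> nontrivial_rep \<Gamma> k \<rho> \<and> finite (\<rho> ` carrier \<Gamma>) \<longrightarrow>
           (\<forall>u\<in>carrier_vec k. vnorm u = 1 \<longrightarrow>
              (\<exists>s\<in>{inv\<^bsub>\<Gamma>\<^esub> (t a) \<otimes>\<^bsub>\<Gamma>\<^esub> t b | a b. a < n \<and> b < n}. vnorm (\<rho> s *\<^sub>v u - u) > \<kappa>)))
      \<longrightarrow>
        (\<forall>k (\<rho>::'g \<Rightarrow> complex mat).
           irreducible_rep \<Gamma> k \<rho> \<and> nontrivial_rep \<Gamma> k \<rho> \<and> finite (\<rho> ` carrier \<Gamma>) \<longrightarrow>
           (let U = diag_block_mat (map (\<lambda>m. \<rho> (t m)) [0..<n]);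
                A = (complex_of_real (1 / lam1)) \<cdot>\<^sub>m kron (map_mat complex_of_real (adj_mat n E)) (1\<^sub>m k);
                lam = Max (cmod ` (spectrum (map_mat complex_of_real (adj_mat n E)) - {complex_of_real lam1})) / lam1;
                d = 1 - Min {(X $ m)\<^sup>2 | m. m < n} * \<kappa>\<^sup>2 / 8
            in \<forall>j::nat. opnorm ((U * A) ^\<^sub>m j) \<le> g lam d ^ (j div 2))))"

proof -
  have main: "\<forall>(n::nat) E (lam1::real) (X::real vec) (\<Gamma>::('g, 'b) monoid_scheme) (t::nat \<Rightarrow> 'g) (\<kappa>::real).
        simple_graph n E \<and> graph_connected n E \<and>
        lam1 = spectral_radius (map_mat complex_of_real (adj_mat n E)) \<and> 0 < lam1 \<and>
        eigenvector (adj_mat n E) X lam1 \<and> (\<forall>m<n. 0 < X $ m) \<and> (\<Sum>m<n. (X $ m)\<^sup>2) = 1 \<and>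
        Max (cmod ` (spectrum (map_mat complex_of_real (adj_mat n E)) - {complex_of_real lam1})) / lam1 < 1 \<and>
        group \<Gamma> \<and> (\<forall>m<n. t m \<in> carrier \<Gamma>) \<and>
        generate \<Gamma> {inv\<^bsub>\<Gamma>\<^esub> (t a) \<otimes>\<^bsub>\<Gamma>\<^esub> t b | a b. a < n \<and> b < n} = carrier \<Gamma> \<and>
        0 < \<kappa> \<and>
        (\<forall>k (\<rho>::'g \<Rightarrow> complex mat).
           irreducible_rep \<Gamma> k \<rho> \<and> nontrivial_rep \<Gamma> k \<rho> \<and> finite (\<rho> ` carrier \<Gamma>) \<longrightarrow>
           (\<forall>u\<in>carrier_vec k. vnorm u = 1 \<longrightarrow>
              (\<exists>s\<in>{inv\<^bsub>\<Gamma>\<^esub> (t a) \<otimes>\<^bsub>\<Gamma>\<^esub> t b | a b. a < n \<and> b < n}. vnorm (\<rho> s *\<^sub>v u - u) > \<kappa>)))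
      \<longrightarrow>
        (\<forall>k (\<rho>::'g \<Rightarrow> complex mat).
           irreducible_rep \<Gamma> k \<rho> \<and> nontrivial_rep \<Gamma> k \<rho> \<and> finite (\<rho> ` carrier \<Gamma>) \<longrightarrow>
           (let U = diag_block_mat (map (\<lambda>m. \<rho> (t m)) [0..<n]);
                A = (complex_of_real (1 / lam1)) \<cdot>\<^sub>m kron (map_mat complex_of_real (adj_mat n E)) (1\<^sub>m k);
                lam = Max (cmod ` (spectrum (map_mat complex_of_real (adj_mat n E)) - {complex_of_real lam1})) / lam1;
                d = 1 - Min {(X $ m)\<^sup>2 | m. m < n} * \<kappa>\<^sup>2 / 8
            in \<forall>j::nat. opnorm ((U * A) ^\<^sub>m j) \<le> gfun lam d ^ (j div 2)))"
  proof (intro allI impI)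
    fix n :: nat and E and lam1 :: real and X :: "real vec" and \<Gamma> :: "('g, 'b) monoid_scheme"
      and t :: "nat \<Rightarrow> 'g" and \<kappa> :: real and k and \<rho> :: "'g \<Rightarrow> complex mat"
    assume H: "simple_graph n E \<and> graph_connected n E \<and>
        lam1 = spectral_radius (map_mat complex_of_real (adj_mat n E)) \<and> 0 < lam1 \<and>
        eigenvector (adj_mat n E) X lam1 \<and> (\<forall>m<n. 0 < X $ m) \<and> (\<Sum>m<n. (X $ m)\<^sup>2) = 1 \<and>
        Max (cmod ` (spectrum (map_mat complex_of_real (adj_mat n E)) - {complex_of_real lam1})) / lam1 < 1 \<and>
        group \<Gamma> \<and> (\<forall>m<n. t m \<in> carrier \<Gamma>) \<and>
        generate \<Gamma> {inv\<^bsub>\<Gamma>\<^esub> (t a) \<otimes>\<^bsub>\<Gamma>\<^esub> t b | a b. a < n \<and> b < n} = carrier \<Gamma> \<and>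
        0 < \<kappa> \<and>
        (\<forall>k (\<rho>::'g \<Rightarrow> complex mat).
           irreducible_rep \<Gamma> k \<rho> \<and> nontrivial_rep \<Gamma> k \<rho> \<and> finite (\<rho> ` carrier \<Gamma>) \<longrightarrow>
           (\<forall>u\<in>carrier_vec k. vnorm u = 1 \<longrightarrow>
              (\<exists>s\<in>{inv\<^bsub>\<Gamma>\<^esub> (t a) \<otimes>\<^bsub>\<Gamma>\<^esub> t b | a b. a < n \<and> b < n}. vnorm (\<rho> s *\<^sub>v u - u) > \<kappa>)))"
    assume R: "irreducible_rep \<Gamma> k \<rho> \<and> nontrivial_rep \<Gamma> k \<rho> \<and> finite (\<rho> ` carrier \<Gamma>)"
    have sepH: "\<forall>u\<in>carrier_vec k. vnorm u = 1 \<longrightarrow>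
              (\<exists>s\<in>{inv\<^bsub>\<Gamma>\<^esub> (t a) \<otimes>\<^bsub>\<Gamma>\<^esub> t b | a b. a < n \<and> b < n}. vnorm (\<rho> s *\<^sub>v u - u) > \<kappa>)"
      using H R by blast
    show "let U = diag_block_mat (map (\<lambda>m. \<rho> (t m)) [0..<n]);
                A = (complex_of_real (1 / lam1)) \<cdot>\<^sub>m kron (map_mat complex_of_real (adj_mat n E)) (1\<^sub>m k);
                lam = Max (cmod ` (spectrum (map_mat complex_of_real (adj_mat n E)) - {complex_of_real lam1})) / lam1;
                d = 1 - Min {(X $ m)\<^sup>2 | m. m < n} * \<kappa>\<^sup>2 / 8
            in \<forall>j::nat. opnorm ((U * A) ^\<^sub>m j) \<le> gfun lam d ^ (j div 2)"
      unfolding Let_def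
    proof
      fix j :: nat
      show "opnorm ((diag_block_mat (map (\<lambda>m. \<rho> (t m)) [0..<n]) *
          ((complex_of_real (1 / lam1)) \<cdot>\<^sub>m kron (map_mat complex_of_real (adj_mat n E)) (1\<^sub>m k))) ^\<^sub>m j)
        \<le> gfun (Max (cmod ` (spectrum (map_mat complex_of_real (adj_mat n E)) - {complex_of_real lam1})) / lam1)
            (1 - Min {(X $ m)\<^sup>2 | m. m < n} * \<kappa>\<^sup>2 / 8) ^ (j div 2)"
        by (rule main_part[of n E lam1 X \<Gamma> t \<kappa> k \<rho>]) (use H R sepH in auto)
    qed
  qed
  show ?thesis
    by (rule exI[of _ gfun]) (use gfun_lt1 shrinkage_gfun main in blast)
qed


end
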